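(* Let $x=(x_1,x_2,x_3)$ be a triple of distinct points of $\partial H^n_{\mathbb{H}}$, let $\sigma_{12}$ be the real geodesic and $\Sigma_{12}$ the quaternionic line containing $x_1,x_2$ (at infinity), and let $\Pi:\overline{H^n_{\mathbb{H}}}\to\overline{\Sigma_{12}}$ be the orthogonal projection (extended continuously to ideal points). Then $$|\tan\mathbb{A}_{\mathbb{H}}(x)|=\sinh\big(d(\Pi(x_3),\sigma_{12})\big),$$ where $d$ is the hyperbolic distance in $H^n_{\mathbb{H}}$ (both sides being $+\infty$ when $\Pi(x_3)\in\partial\Sigma_{12}$).
   Context: Quaternionic hyperbolic space $H^n_{\mathbb{H}}$ is the set of negative lines in the left $\mathbb{H}$-vector space $\mathbb{H}^{n+1}$ with form $\langle z,w\rangle=\sum_{i=1}^n z_i\bar w_i-z_{n+1}\bar w_{n+1}$, $\partial H^n_{\mathbb{H}}$ the null lines; the metric is normalized so that sectional curvature lies in $[-1,-1/4]$, so each quaternionic line is isometric to real hyperbolic 4-space of curvature $-1$. For distinct points with lifts $\tilde x_i$, the triple product is $\langle\tilde x_1,\tilde x_2\rangle\langle\tilde x_2,\tilde x_3\rangle\langle\tilde x_3,\tilde x_1\rangle\in\mathbb{H}$, and $\mathbb{A}_{\mathbb{H}}(x)\in[0,\pi/2]$ is the angle in $\mathbb{H}\cong\mathbb{R}^4$ between $\mathbb{R}\cdot 1$ and this triple product. The orthogonal projection onto $\Sigma_{12}$ maps each point to its nearest point of $\Sigma_{12}$. *)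

theory Defs
  imports "HOL-Analysis.Analysis"
begin

section \<open>Quaternions, realised as real^4 (components 1,i,j,k)\<close>

type_synonym quat = "real^4"

definition qmul :: "quat \<Rightarrow> quat \<Rightarrow> quat" where
  "qmul a b = vector
     [a$1*b$1 - a$2*b$2 - a$3*b$3 - a$4*b$4,
      a$1*b$2 + a$2*b$1 + a$3*b$4 - a$4*b$3,
      a$1*b$3 - a$2*b$4 + a$3*b$1 + a$4*b$2,
      a$1*b$4 + a$2*b$3 - a$3*b$2 + a$4*b$1]"

definition qcnj :: "quat \<Rightarrow> quat" where
  "qcnj a = vector [a$1, - a$2, - a$3, - a$4]"

definition qis_real :: "quat \<Rightarrow> bool" where
  "qis_real a \<longleftrightarrow> a$2 = 0 \<and> a$3 = 0 \<and> a$4 = 0"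

section \<open>The left H-vector space H^(n+1): first n coordinates indexed by 'n, last one separate\<close>

type_synonym 'n qvec = "(quat^'n) \<times> quat"

definition qsmul :: "quat \<Rightarrow> 'n::finite qvec \<Rightarrow> 'n qvec" where
  "qsmul c v = ((\<chi> i. qmul c (fst v $ i)), qmul c (snd v))"

definition herm :: "'n::finite qvec \<Rightarrow> 'n qvec \<Rightarrow> quat" where
  "herm z w = (\<Sum>i\<in>UNIV. qmul (fst z $ i) (qcnj (fst w $ i))) - qmul (snd z) (qcnj (snd w))"

definition qline :: "'n::finite qvec \<Rightarrow> 'n qvec set" where
  "qline v = {qsmul c v | c. True}"

definition hyp :: "'n::finite qvec set set" where
  "hyp = {qline v | v. herm v v $ 1 < 0}"

definition bdry :: "'n::finite qvec set set" where
  "bdry = {qline v | v. v \<noteq> 0 \<and> herm v v = 0}"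

definition lift :: "'n::finite qvec set \<Rightarrow> 'n qvec" where
  "lift p = (SOME v. v \<in> p \<and> v \<noteq> 0)"

text \<open>Hyperbolic distance (curvature in [-1,-1/4]):
  cosh^2(d/2) = <z,w><w,z> / (<z,z><w,w>)\<close>
definition hdist :: "'n::finite qvec set \<Rightarrow> 'n qvec set \<Rightarrow> real" where
  "hdist p q = (let z = lift p; w = lift q in
     2 * arcosh (norm (herm z w) / sqrt (herm z z $ 1 * herm w w $ 1)))"

definition hdist_set :: "'n::finite qvec set \<Rightarrow> 'n qvec set set \<Rightarrow> real" where
  "hdist_set p S = Inf (hdist p ` S)"

definition qspan2 :: "'n::finite qvec \<Rightarrow> 'n qvec \<Rightarrow> 'n qvec set" where
  "qspan2 a b = {qsmul \<alpha> a + qsmul \<beta> b | \<alpha> \<beta>. True}"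

definition QLine :: "'n::finite qvec set \<Rightarrow> 'n qvec set \<Rightarrow> 'n qvec set set" where
  "QLine x1 x2 = {p \<in> hyp. p \<subseteq> qspan2 (lift x1) (lift x2)}"

definition QLine_bd :: "'n::finite qvec set \<Rightarrow> 'n qvec set \<Rightarrow> 'n qvec set set" where
  "QLine_bd x1 x2 = {p \<in> bdry. p \<subseteq> qspan2 (lift x1) (lift x2)}"

text \<open>The real geodesic sigma_12 with ideal endpoints x1, x2:
  the negative lines [a + b] with a, b lifts of x1, x2 and <a,b> real\<close>
definition geod :: "'n::finite qvec set \<Rightarrow> 'n qvec set \<Rightarrow> 'n qvec set set" where
  "geod x1 x2 = {qline (a + b) | a b. a \<in> x1 \<and> b \<in> x2 \<and> a \<noteq> 0 \<and> b \<noteq> 0 \<and>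
                   qis_real (herm a b) \<and> qline (a + b) \<in> hyp}"

definition proj :: "'n::finite qvec set set \<Rightarrow> 'n qvec set \<Rightarrow> 'n qvec set" where
  "proj S y = (THE p. p \<in> S \<and> (\<forall>q\<in>S. hdist y p \<le> hdist y q))"

text \<open>Convergence of points of the closure (projective / cone topology):
  some nonzero lifts converge to a nonzero lift of the limit\<close>
definition pconv :: "(nat \<Rightarrow> 'n::finite qvec set) \<Rightarrow> 'n qvec set \<Rightarrow> bool" where
  "pconv P p \<longleftrightarrow> (\<exists>V v. v \<in> p \<and> v \<noteq> 0 \<and> (\<forall>k. V k \<in> P k \<and> V k \<noteq> 0) \<and> V \<longlonglongrightarrow> v)"

text \<open>Continuous extension of the projection onto S (with ideal boundary Sb) to an ideal point x\<close>
definition proj_ext :: "'n::finite qvec set set \<Rightarrow> 'n qvec set set \<Rightarrow> 'n qvec set \<Rightarrow> 'n qvec set" where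
  "proj_ext S Sb x = (THE p. p \<in> S \<union> Sb \<and>
      (\<forall>Y. (\<forall>k. Y k \<in> hyp) \<and> pconv Y x \<longrightarrow> pconv (\<lambda>k. proj S (Y k)) p))"

text \<open>Quaternionic Cartan angular invariant: angle in R^4 between R*1 and the triple product\<close>
definition qcartan :: "'n::finite qvec set \<Rightarrow> 'n qvec set \<Rightarrow> 'n qvec set \<Rightarrow> real" where
  "qcartan x1 x2 x3 = (let a = lift x1; b = lift x2; c = lift x3;
      T = qmul (qmul (herm a b) (herm b c)) (herm c a) in arccos (\<bar>T $ 1\<bar> / norm T))"

end

theory Submission
  imports Defs
begin

datatype hq = HQ (h1: real) (h2: real) (h3: real) (h4: real)

lemma hq_eqI: "h1 a = h1 b \<Longrightarrow> h2 a = h2 b \<Longrightarrow> h3 a = h3 b \<Longrightarrow> h4 a = h4 b \<Longrightarrow> a = b"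
  by (cases a; cases b) auto

instantiation hq :: "{ring_1, inverse}"
begin
definition "0 = HQ 0 0 0 0"
definition "1 = HQ 1 0 0 0"
definition "a + b = HQ (h1 a + h1 b) (h2 a + h2 b) (h3 a + h3 b) (h4 a + h4 b)"
definition "a - b = HQ (h1 a - h1 b) (h2 a - h2 b) (h3 a - h3 b) (h4 a - h4 b)"
definition "- a = HQ (- h1 a) (- h2 a) (- h3 a) (- h4 a)"
definition "a * b = HQ
      (h1 a*h1 b - h2 a*h2 b - h3 a*h3 b - h4 a*h4 b)
      (h1 a*h2 b + h2 a*h1 b + h3 a*h4 b - h4 a*h3 b)
      (h1 a*h3 b - h2 a*h4 b + h3 a*h1 b + h4 a*h2 b)
      (h1 a*h4 b + h2 a*h3 b - h3 a*h2 b + h4 a*h1 b)"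
definition "inverse a = (let n = h1 a^2 + h2 a^2 + h3 a^2 + h4 a^2 in
    HQ (h1 a / n) (- h2 a / n) (- h3 a / n) (- h4 a / n))"
definition "divide a b = a * inverse (b::hq)"
instance
  by standard (auto intro!: hq_eqI simp: zero_hq_def one_hq_def plus_hq_def minus_hq_def
      uminus_hq_def times_hq_def algebra_simps)
end

lemma hq_sel_simps[simp]:
  "h1 0 = 0" "h2 0 = 0" "h3 0 = 0" "h4 0 = 0"
  "h1 1 = 1" "h2 1 = 0" "h3 1 = 0" "h4 1 = 0"
  "h1 (a+b) = h1 a + h1 b" "h2 (a+b) = h2 a + h2 b" "h3 (a+b) = h3 a + h3 b" "h4 (a+b) = h4 a + h4 b"
  "h1 (a-b) = h1 a - h1 b" "h2 (a-b) = h2 a - h2 b" "h3 (a-b) = h3 a - h3 b" "h4 (a-b) = h4 a - h4 b"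
  "h1 (-a) = - h1 a" "h2 (-a) = - h2 a" "h3 (-a) = - h3 a" "h4 (-a) = - h4 a"
  by (simp_all add: zero_hq_def one_hq_def plus_hq_def minus_hq_def uminus_hq_def)

lemma hq_mult_sel[simp]:
  "h1 (a*b) = h1 a*h1 b - h2 a*h2 b - h3 a*h3 b - h4 a*h4 b"
  "h2 (a*b) = h1 a*h2 b + h2 a*h1 b + h3 a*h4 b - h4 a*h3 b"
  "h3 (a*b) = h1 a*h3 b - h2 a*h4 b + h3 a*h1 b + h4 a*h2 b"
  "h4 (a*b) = h1 a*h4 b + h2 a*h3 b - h3 a*h2 b + h4 a*h1 b"
  by (simp_all add: times_hq_def)

definition hns :: "hq \<Rightarrow> real" where "hns a = h1 a^2 + h2 a^2 + h3 a^2 + h4 a^2"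

lemma hns_nonneg: "hns a \<ge> 0" by (simp add: hns_def)
lemma hns_zero_iff: "hns a = 0 \<longleftrightarrow> a = 0"
  by (auto simp: hns_def intro!: hq_eqI) (simp_all add: add_nonneg_eq_0_iff)

lemma inv_sel:
  "h1 (inverse a) = h1 a * inverse (hns a)" "h2 (inverse a) = - h2 a * inverse (hns a)"
  "h3 (inverse a) = - h3 a * inverse (hns a)" "h4 (inverse a) = - h4 a * inverse (hns a)"
  by (simp_all add: inverse_hq_def hns_def Let_def divide_inverse)

instantiation hq :: division_ring
begin
instance
proof
  fix a :: hq assume "a \<noteq> 0"
  then have n: "hns a * inverse (hns a) = 1" by (simp add: hns_zero_iff)
  have "h1 (inverse a * a) = hns a * inverse (hns a)" "h2 (inverse a * a) = 0"
     "h3 (inverse a * a) = 0" "h4 (inverse a * a) = 0"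
    by (simp_all only: hq_mult_sel inv_sel hns_def) (simp_all add: algebra_simps power2_eq_square)
  then show "inverse a * a = 1" using n by (intro hq_eqI) simp_all
  have "h1 (a * inverse a) = hns a * inverse (hns a)" "h2 (a * inverse a) = 0"
     "h3 (a * inverse a) = 0" "h4 (a * inverse a) = 0"
    by (simp_all only: hq_mult_sel inv_sel hns_def) (simp_all add: algebra_simps power2_eq_square)
  then show "a * inverse a = 1" using n by (intro hq_eqI) simp_all
next
  fix a b :: hq show "a / b = a * inverse b" by (simp add: divide_hq_def)
next
  show "inverse (0::hq) = 0" by (simp add: inverse_hq_def zero_hq_def)
qed
end


definition hr :: "real \<Rightarrow> hq" where "hr r = HQ r 0 0 0"
definition hcnj :: "hq \<Rightarrow> hq" where "hcnj a = HQ (h1 a) (- h2 a) (- h3 a) (- h4 a)"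

lemma hr_sel[simp]: "h1 (hr r) = r" "h2 (hr r) = 0" "h3 (hr r) = 0" "h4 (hr r) = 0"
  by (simp_all add: hr_def)
lemma hcnj_sel[simp]: "h1 (hcnj a) = h1 a" "h2 (hcnj a) = - h2 a" "h3 (hcnj a) = - h3 a" "h4 (hcnj a) = - h4 a"
  by (simp_all add: hcnj_def)


lemma hr_0[simp]: "hr 0 = 0" by (intro hq_eqI; simp add: algebra_simps hns_def power2_eq_square)
lemma hr_1[simp]: "hr 1 = 1" by (intro hq_eqI; simp add: algebra_simps hns_def power2_eq_square)
lemma hr_add: "hr (x + y) = hr x + hr y" by (intro hq_eqI; simp add: algebra_simps hns_def power2_eq_square)
lemma hr_diff: "hr (x - y) = hr x - hr y" by (intro hq_eqI; simp add: algebra_simps hns_def power2_eq_square)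
lemma hr_mult: "hr (x * y) = hr x * hr y" by (intro hq_eqI; simp add: algebra_simps hns_def power2_eq_square)
lemma hr_minus: "hr (- x) = - hr x" by (intro hq_eqI; simp add: algebra_simps hns_def power2_eq_square)
lemma hr_comm: "hr r * a = a * hr r" by (intro hq_eqI; simp add: algebra_simps hns_def power2_eq_square)
lemma hr_inj[simp]: "hr x = hr y \<longleftrightarrow> x = y" by (metis hr_sel(1))
lemma hr_eq0[simp]: "hr x = 0 \<longleftrightarrow> x = 0" by (metis hr_0 hr_inj)
lemma hr_inverse: "hr (inverse x) = inverse (hr x)"
proof (cases "x = 0")
  case False then show ?thesis
    by (metis hr_eq0 hr_mult hr_1 inverse_unique right_inverse)
qed (simp add: hns_def)
lemma hcnj_mult: "hcnj (a * b) = hcnj b * hcnj a" by (intro hq_eqI; simp add: algebra_simps hns_def power2_eq_square)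
lemma hcnj_add: "hcnj (a + b) = hcnj a + hcnj b" by (intro hq_eqI; simp add: algebra_simps hns_def power2_eq_square)
lemma hcnj_diff: "hcnj (a - b) = hcnj a - hcnj b" by (intro hq_eqI; simp add: algebra_simps hns_def power2_eq_square)
lemma hcnj_minus: "hcnj (- a) = - hcnj a" by (intro hq_eqI; simp add: algebra_simps hns_def power2_eq_square)
lemma hcnj_hcnj[simp]: "hcnj (hcnj a) = a" by (intro hq_eqI; simp add: algebra_simps hns_def power2_eq_square)
lemma hcnj_0[simp]: "hcnj 0 = 0" by (intro hq_eqI; simp add: algebra_simps hns_def power2_eq_square)
lemma hcnj_1[simp]: "hcnj 1 = 1" by (intro hq_eqI; simp add: algebra_simps hns_def power2_eq_square)
lemma hcnj_hr[simp]: "hcnj (hr r) = hr r" by (intro hq_eqI; simp add: algebra_simps hns_def power2_eq_square)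
lemma hcnj_eq0[simp]: "hcnj a = 0 \<longleftrightarrow> a = 0" by (metis hcnj_0 hcnj_hcnj)
lemma mult_hcnj: "a * hcnj a = hr (hns a)" by (intro hq_eqI; simp add: algebra_simps hns_def power2_eq_square)
lemma hcnj_mult_self: "hcnj a * a = hr (hns a)" by (intro hq_eqI; simp add: algebra_simps hns_def power2_eq_square)
lemma hns_mult: "hns (a * b) = hns a * hns b" by (simp add: hns_def algebra_simps power2_eq_square)
lemma h1_comm: "h1 (a * b) = h1 (b * a)" by (simp add: algebra_simps)
lemma hns_hcnj[simp]: "hns (hcnj a) = hns a" by (simp add: hns_def)
lemma hns_hr[simp]: "hns (hr r) = r^2" by (simp add: hns_def)
lemma hns_minus[simp]: "hns (- a) = hns a" by (simp add: hns_def)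
lemma hcnj_sum: "hcnj (sum f A) = sum (\<lambda>x. hcnj (f x)) A"
  by (induction A rule: infinite_finite_induct) (simp_all add: hcnj_add)
lemma h1_sum: "h1 (sum f A) = sum (\<lambda>x. h1 (f x)) A"
  by (induction A rule: infinite_finite_induct) simp_all
lemma hinverse_eq: "inverse a = hr (inverse (hns a)) * hcnj a"
  by (intro hq_eqI) (simp_all add: inv_sel algebra_simps)
lemma hcnj_inverse: "hcnj (inverse a) = inverse (hcnj a)"
  by (simp add: hinverse_eq hcnj_mult hr_comm)
lemma hns_inverse: "hns (inverse a) = inverse (hns a)"
proof (cases "a = 0")
  case False
  then have "hns (inverse a) * hns a = 1" by (metis hns_mult left_inverse hns_hr hr_1 power_one)
  then show ?thesis by (metis inverse_unique mult.commute)
qed (simp add: hns_def)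
lemma hns_pos: "a \<noteq> 0 \<Longrightarrow> hns a > 0" using hns_nonneg hns_zero_iff by (metis less_eq_real_def)
lemma h1_sq_le: "h1 a ^ 2 \<le> hns a" by (simp add: hns_def)
lemma hr_mult_sel[simp]: "h1 (hr r * a) = r * h1 a" "hns (hr r * a) = r^2 * hns a"
  by (simp_all add: hns_def algebra_simps power2_eq_square)

lemma vector_4 [simp]:
 "(vector [x,y,z,w] ::('a::zero)^4)$1 = x"
 "(vector [x,y,z,w] ::('a::zero)^4)$2 = y"
 "(vector [x,y,z,w] ::('a::zero)^4)$3 = z"
 "(vector [x,y,z,w] ::('a::zero)^4)$4 = w"
  unfolding vector_def by simp_all

definition Qv :: "quat \<Rightarrow> hq" where "Qv a = HQ (a$1) (a$2) (a$3) (a$4)"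
definition Rv :: "hq \<Rightarrow> quat" where "Rv x = vector [h1 x, h2 x, h3 x, h4 x]"

lemma Qv_sel[simp]: "h1 (Qv a) = a$1" "h2 (Qv a) = a$2" "h3 (Qv a) = a$3" "h4 (Qv a) = a$4"
  by (simp_all add: Qv_def)
lemma Rv_Qv[simp]: "Rv (Qv a) = a"
  unfolding Rv_def by (simp add: vec_eq_iff forall_4)
lemma Qv_Rv[simp]: "Qv (Rv x) = x"
  unfolding Rv_def by (intro hq_eqI) simp_all
lemma Qv_inj[simp]: "Qv a = Qv b \<longleftrightarrow> a = b" by (metis Rv_Qv)
lemma Qv_qmul[simp]: "Qv (qmul a b) = Qv a * Qv b"
  by (intro hq_eqI) (simp_all add: qmul_def)
lemma Qv_qcnj[simp]: "Qv (qcnj a) = hcnj (Qv a)"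
  by (intro hq_eqI) (simp_all add: qcnj_def)
lemma Qv_add[simp]: "Qv (a + b) = Qv a + Qv b" by (intro hq_eqI) simp_all
lemma Qv_diff[simp]: "Qv (a - b) = Qv a - Qv b" by (intro hq_eqI) simp_all
lemma Qv_minus[simp]: "Qv (- a) = - Qv a" by (intro hq_eqI) simp_all
lemma Qv_0[simp]: "Qv 0 = 0" by (intro hq_eqI) simp_all
lemma Qv_eq0[simp]: "Qv a = 0 \<longleftrightarrow> a = 0" by (metis Qv_0 Qv_inj)
lemma Qv_scaleR: "Qv (r *\<^sub>R a) = hr r * Qv a" by (intro hq_eqI) simp_all
lemma Qv_sum: "Qv (sum f A) = sum (\<lambda>x. Qv (f x)) A"
  using sum_comp_morphism[of Qv f A] by (simp add: o_def)
lemma norm_quat_sq: "(norm (a::quat))^2 = hns (Qv a)"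
proof -
  have "(norm a)^2 = (\<Sum>i\<in>UNIV. (a$i)^2)"
    unfolding norm_vec_def L2_set_def by (simp add: sum_nonneg)
  then show ?thesis by (simp add: sum_4 hns_def)
qed
lemma norm_quat: "norm (a::quat) = sqrt (hns (Qv a))"
  by (metis norm_quat_sq norm_ge_zero real_sqrt_unique)

lemma hns_0[simp]: "hns 0 = 0" by (simp add: hns_def)
lemma hr_sum: "hr (sum f A) = sum (\<lambda>x. hr (f x)) A"
  by (induction A rule: infinite_finite_induct) (simp_all add: hr_add)


definition zc :: "'n::finite qvec \<Rightarrow> 'n \<Rightarrow> hq" where "zc z i = Qv (fst z $ i)"
definition z0 :: "'n::finite qvec \<Rightarrow> hq" where "z0 z = Qv (snd z)"
definition HH :: "'n::finite qvec \<Rightarrow> 'n qvec \<Rightarrow> hq" where "HH z w = Qv (herm z w)"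
definition nsq :: "'n::finite qvec \<Rightarrow> real" where "nsq z = herm z z $ 1"
definition sm :: "hq \<Rightarrow> 'n::finite qvec \<Rightarrow> 'n qvec" where "sm c v = qsmul (Rv c) v"

lemma qvec_eq_iff: "z = w \<longleftrightarrow> (\<forall>i. zc z i = zc w i) \<and> z0 z = z0 w"
  by (auto simp: zc_def z0_def vec_eq_iff prod_eq_iff)

lemma zc_simps[simp]:
  "zc (z + w) i = zc z i + zc w i" "zc (z - w) i = zc z i - zc w i" "zc (- z) i = - zc z i"
  "zc 0 i = 0" "zc (sm c z) i = c * zc z i"
  by (simp_all add: zc_def sm_def qsmul_def)
lemma z0_simps[simp]:
  "z0 (z + w) = z0 z + z0 w" "z0 (z - w) = z0 z - z0 w" "z0 (- z) = - z0 z"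
  "z0 0 = 0" "z0 (sm c z) = c * z0 z"
  by (simp_all add: z0_def sm_def qsmul_def)

lemma HH_eq: "HH z w = (\<Sum>i\<in>UNIV. zc z i * hcnj (zc w i)) - z0 z * hcnj (z0 w)"
  by (simp add: HH_def herm_def Qv_sum zc_def z0_def)

lemma HH_add_left: "HH (z + z') w = HH z w + HH z' w"
  by (simp add: HH_eq algebra_simps sum.distrib)
lemma HH_add_right: "HH w (z + z') = HH w z + HH w z'"
  by (simp add: HH_eq algebra_simps sum.distrib hcnj_add)
lemma HH_diff_left: "HH (z - z') w = HH z w - HH z' w"
  by (simp add: HH_eq algebra_simps sum_subtractf)
lemma HH_diff_right: "HH w (z - z') = HH w z - HH w z'"
  by (simp add: HH_eq algebra_simps sum_subtractf hcnj_diff)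
lemma HH_sm_left: "HH (sm c z) w = c * HH z w"
  by (simp add: HH_eq algebra_simps sum_distrib_left mult.assoc)
lemma HH_sm_right: "HH z (sm c w) = HH z w * hcnj c"
  by (simp add: HH_eq algebra_simps sum_distrib_right mult.assoc hcnj_mult)
lemma HH_sym: "HH w z = hcnj (HH z w)"
  by (simp add: HH_eq hcnj_diff hcnj_sum hcnj_mult)
lemma HH_zero[simp]: "HH 0 w = 0" "HH w 0 = 0"
  by (simp_all add: HH_eq)

lemma HH_self: "HH z z = hr ((\<Sum>i\<in>UNIV. hns (zc z i)) - hns (z0 z))"
  unfolding HH_eq mult_hcnj hr_diff hr_sum by simp
  
lemma nsq_eq: "nsq z = (\<Sum>i\<in>UNIV. hns (zc z i)) - hns (z0 z)"
proof -
  have "nsq z = h1 (HH z z)" by (simp add: nsq_def HH_def)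
  then show ?thesis by (simp add: HH_self)
qed
lemma HH_self_nsq: "HH z z = hr (nsq z)" by (simp add: HH_self nsq_eq)

lemma sm_sm[simp]: "sm c (sm d v) = sm (c * d) v"
  by (subst qvec_eq_iff) (simp add: mult.assoc)
lemma sm_1[simp]: "sm 1 v = v"
  by (subst qvec_eq_iff) simp
lemma sm_0[simp]: "sm 0 v = 0"
  by (subst qvec_eq_iff) simp
lemma sm_0r[simp]: "sm c 0 = 0"
  by (subst qvec_eq_iff) simp
lemma sm_add: "sm c (v + w) = sm c v + sm c w"
  by (subst qvec_eq_iff) (simp add: distrib_left)
lemma sm_add2: "sm (c + d) v = sm c v + sm d v"
  by (subst qvec_eq_iff) (simp add: distrib_right)
lemma sm_diff: "sm c (v - w) = sm c v - sm c w"
  by (metis add_diff_cancel sm_add diff_add_cancel)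
lemma sm_diff2: "sm (c - d) v = sm c v - sm d v"
  by (metis add_diff_cancel sm_add2 diff_add_cancel)

lemma nsq_sm: "nsq (sm c z) = hns c * nsq z"
proof -
  have "hr (nsq (sm c z)) = c * hr (nsq z) * hcnj c"
    by (simp add: HH_self_nsq[symmetric] HH_sm_left HH_sm_right)
  also have "\<dots> = hr (hns c * nsq z)"
  proof -
    have "c * hr (nsq z) * hcnj c = hr (nsq z) * (c * hcnj c)" using hr_comm[of "nsq z" c] by (metis mult.assoc)
    then show ?thesis by (simp add: mult_hcnj hr_mult[symmetric] mult.commute)
  qed
  finally show ?thesis by simp
qed

lemma qline_sm: "qline v = {sm c v | c. True}"
proof (intro set_eqI iffI)
  fix x assume "x \<in> qline v"
  then obtain c where "x = qsmul c v" by (auto simp: qline_def)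
  then have "x = sm (Qv c) v" by (simp add: sm_def)
  then show "x \<in> {sm c v | c. True}" by blast
next
  fix x assume "x \<in> {sm c v | c. True}"
  then obtain c where "x = sm c v" by auto
  then show "x \<in> qline v" by (auto simp: qline_def sm_def)
qed

lemma qsmul_sm: "qsmul c v = sm (Qv c) v" by (simp add: sm_def)

lemma sm_eq0: "sm c v = 0 \<longleftrightarrow> c = 0 \<or> v = 0"
proof
  assume h: "sm c v = 0"
  show "c = 0 \<or> v = 0"
  proof (rule ccontr)
    assume "\<not> (c = 0 \<or> v = 0)"
    then have "c \<noteq> 0" "v \<noteq> 0" by auto
    have "sm (inverse c) (sm c v) = v" using \<open>c \<noteq> 0\<close> by simp
    then show False using h \<open>v \<noteq> 0\<close> by simp
  qed
qed auto

lemma qline_sm_eq: "c \<noteq> 0 \<Longrightarrow> qline (sm c v) = qline v"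
proof -
  assume c: "c \<noteq> 0"
  have "{sm d (sm c v) | d. True} = {sm d v | d. True}"
  proof (intro set_eqI iffI)
    fix x assume "x \<in> {sm d (sm c v) | d. True}" then show "x \<in> {sm d v | d. True}" by auto
  next
    fix x assume "x \<in> {sm d v | d. True}"
    then obtain d where "x = sm d v" by auto
    then have "x = sm (d * inverse c) (sm c v)" using c by (simp add: mult.assoc)
    then show "x \<in> {sm d (sm c v) | d. True}" by blast
  qed
  then show ?thesis by (simp add: qline_sm)
qed

lemma nsq_nonneg_of_z0: "z0 v = 0 \<Longrightarrow> nsq v \<ge> 0"
  by (simp add: nsq_eq sum_nonneg hns_nonneg)
lemma nsq_zero_of_z0: "z0 v = 0 \<Longrightarrow> nsq v = 0 \<Longrightarrow> v = 0"
proof -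
  assume a: "z0 v = 0" "nsq v = 0"
  then have "(\<Sum>i\<in>UNIV. hns (zc v i)) = 0" by (simp add: nsq_eq)
  then have "\<forall>i. hns (zc v i) = 0" using sum_nonneg_eq_0_iff[of UNIV "\<lambda>i. hns (zc v i)"] hns_nonneg by auto
  then show "v = 0" using a by (simp add: qvec_eq_iff hns_zero_iff)
qed


lemma HH_diff2: "HH (u - v) (u - v) = HH u u - HH u v - HH v u + HH v v"
  by (simp add: HH_diff_left HH_diff_right algebra_simps)
lemma HH_add2: "HH (u + v) (u + v) = HH u u + HH u v + HH v u + HH v v"
  by (simp add: HH_add_left HH_add_right algebra_simps)
lemma HH_orth_sym: "HH u a = 0 \<Longrightarrow> HH a u = 0"
  by (metis HH_sym hcnj_0)

lemma L0:
  assumes "z0 a \<noteq> 0" "HH u a = 0"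
  shows "z0 (u - sm (z0 u * inverse (z0 a)) a) = 0"
    and "nsq (u - sm (z0 u * inverse (z0 a)) a) = nsq u + hns (z0 u * inverse (z0 a)) * nsq a"
proof -
  define k where "k = z0 u * inverse (z0 a)"
  show "z0 (u - sm (z0 u * inverse (z0 a)) a) = 0"
    using assms(1) by (simp add: mult.assoc)
  have "hr (nsq (u - sm k a)) = HH u u - HH u (sm k a) - HH (sm k a) u + HH (sm k a) (sm k a)"
    by (simp add: HH_self_nsq[symmetric] HH_diff2)
  also have "\<dots> = hr (nsq u) + hr (hns k * nsq a)"
    using assms(2) HH_orth_sym[OF assms(2)]
    by (simp add: HH_sm_left HH_sm_right HH_self_nsq[symmetric] nsq_sm[symmetric])
  finally have "nsq (u - sm k a) = nsq u + hns k * nsq a" by (simp add: hr_add[symmetric])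
  then show "nsq (u - sm (z0 u * inverse (z0 a)) a) = nsq u + hns (z0 u * inverse (z0 a)) * nsq a"
    by (simp add: k_def)
qed

lemma z0_nonzero: "nsq v \<le> 0 \<Longrightarrow> v \<noteq> 0 \<Longrightarrow> z0 v \<noteq> 0"
  using nsq_nonneg_of_z0 nsq_zero_of_z0 by fastforce

lemma null_orth:
  assumes "nsq a = 0" "a \<noteq> 0" "HH u a = 0"
  shows "nsq u \<ge> 0" and "nsq u = 0 \<Longrightarrow> \<exists>k. u = sm k a"
proof -
  have za: "z0 a \<noteq> 0" by (rule z0_nonzero) (use assms in auto)
  define k where "k = z0 u * inverse (z0 a)"
  have e: "nsq (u - sm k a) = nsq u" using L0(2)[OF za assms(3)] assms(1) by (simp add: k_def)
  have z: "z0 (u - sm k a) = 0" using L0(1)[OF za assms(3)] by (simp add: k_def)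
  show "nsq u \<ge> 0" using nsq_nonneg_of_z0[OF z] e by simp
  assume "nsq u = 0"
  then have "u - sm k a = 0" using nsq_zero_of_z0[OF z] e by simp
  then show "\<exists>k. u = sm k a" by auto
qed

lemma neg_orth:
  assumes "nsq w < 0" "HH r w = 0"
  shows "nsq r \<ge> 0" and "nsq r = 0 \<Longrightarrow> r = 0"
proof -
  have w0: "w \<noteq> 0" using assms(1) by (auto simp: nsq_eq)
  have za: "z0 w \<noteq> 0" by (rule z0_nonzero) (use assms w0 in auto)
  define k where "k = z0 r * inverse (z0 w)"
  have e: "nsq (r - sm k w) = nsq r + hns k * nsq w" using L0(2)[OF za assms(2)] by (simp add: k_def)
  have z: "z0 (r - sm k w) = 0" using L0(1)[OF za assms(2)] by (simp add: k_def)
  have p1: "nsq (r - sm k w) \<ge> 0" using nsq_nonneg_of_z0[OF z] .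
  have p2: "hns k * nsq w \<le> 0" using assms(1) hns_nonneg[of k] by (simp add: mult_nonneg_nonpos)
  show "nsq r \<ge> 0" using e p1 p2 by linarith
  assume "nsq r = 0"
  then have "nsq (r - sm k w) = 0" "hns k * nsq w = 0" using e p1 p2 by linarith+
  then have "r - sm k w = 0" "k = 0" using nsq_zero_of_z0[OF z] assms(1) hns_zero_iff by auto
  then show "r = 0" by simp
qed

lemma null_same_line:
  assumes "nsq a = 0" "a \<noteq> 0" "nsq c = 0" "c \<noteq> 0" "HH c a = 0"
  shows "qline c = qline a"
proof -
  obtain k where k: "c = sm k a" using null_orth(2)[OF assms(1,2,5)] assms(3) by blast
  then have "k \<noteq> 0" using assms(4) by auto
  then show ?thesis using k qline_sm_eq by simp
qed

lemma rcs:
  assumes "nsq w < 0"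
  shows "hns (HH q w) \<ge> nsq w * nsq q" and "hns (HH q w) = nsq w * nsq q \<Longrightarrow> \<exists>k. q = sm k w"
proof -
  define k where "k = HH q w * hr (inverse (nsq w))"
  define r where "r = q - sm k w"
  have nw: "nsq w \<noteq> 0" using assms by simp
  have "HH r w = HH q w - k * hr (nsq w)"
    by (simp add: r_def HH_diff_left HH_sm_left HH_self_nsq)
  also have "\<dots> = 0" using nw
    by (simp add: k_def mult.assoc hr_mult[symmetric])
  finally have rw: "HH r w = 0" .
  have qq: "q = r + sm k w" by (simp add: r_def)
  have "hr (nsq q) = HH r r + HH r (sm k w) + HH (sm k w) r + HH (sm k w) (sm k w)"
  proof -
    have "hr (nsq q) = HH (r + sm k w) (r + sm k w)" using qq by (simp add: HH_self_nsq)
    then show ?thesis by (simp add: HH_add2)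
  qed
  also have "\<dots> = hr (nsq r) + hr (hns k * nsq w)"
    using rw HH_orth_sym[OF rw]
    by (simp add: HH_sm_left HH_sm_right HH_self_nsq[symmetric] nsq_sm[symmetric])
  finally have nq: "nsq q = nsq r + hns k * nsq w" by (simp add: hr_add[symmetric])
  have hk: "hns k = hns (HH q w) / (nsq w)^2"
    by (simp add: k_def hns_mult power_inverse divide_inverse)
  have key: "nsq w * nsq q = nsq w * nsq r + hns (HH q w)"
    using nw by (simp add: nq hk field_simps power2_eq_square)
  have nr: "nsq r \<ge> 0" using neg_orth(1)[OF assms rw] .
  have "nsq w * nsq r \<le> 0" using nr assms by (simp add: mult_nonpos_nonneg)
  then show "hns (HH q w) \<ge> nsq w * nsq q" using key by linarith
  assume "hns (HH q w) = nsq w * nsq q"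
  then have "nsq w * nsq r = 0" using key by linarith
  then have "nsq r = 0" using nw by simp
  then have "r = 0" using neg_orth(2)[OF assms rw] by simp
  then show "\<exists>k. q = sm k w" using qq by auto
qed


definition Pj :: "'n::finite qvec \<Rightarrow> 'n qvec \<Rightarrow> 'n qvec \<Rightarrow> 'n qvec" where
  "Pj a b z = sm (HH z b * inverse (HH a b)) a + sm (HH z a * inverse (hcnj (HH a b))) b"

lemma HH_span_left: "HH (sm l a + sm m b) g = l * HH a g + m * HH b g"
  by (simp add: HH_add_left HH_sm_left)
lemma HH_span_right: "HH g (sm l a + sm m b) = HH g a * hcnj l + HH g b * hcnj m"
  by (simp add: HH_add_right HH_sm_right)

lemma nsq_zero_HH: "nsq a = 0 \<Longrightarrow> HH a a = 0" by (simp add: HH_self_nsq)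

lemma h1_plus_cnj: "h1 (x + hcnj x) = 2 * h1 x" by simp

lemma nsq_span:
  assumes "nsq a = 0" "nsq b = 0"
  shows "nsq (sm l a + sm m b) = 2 * h1 (l * HH a b * hcnj m)"
proof -
  have "hr (nsq (sm l a + sm m b)) = l * HH a b * hcnj m + hcnj (l * HH a b * hcnj m)"
    using nsq_zero_HH[OF assms(1)] nsq_zero_HH[OF assms(2)]
    by (simp add: HH_self_nsq[symmetric] HH_span_left HH_span_right HH_sym[of a b]
        hcnj_mult mult.assoc algebra_simps)
  then have "nsq (sm l a + sm m b) = h1 (l * HH a b * hcnj m + hcnj (l * HH a b * hcnj m))"
    by (metis hr_sel(1))
  then show ?thesis by (simp only: h1_plus_cnj)
qed

lemma Pj_a:
  assumes "nsq a = 0" "nsq b = 0" "HH a b \<noteq> 0"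
  shows "HH (Pj a b z) a = HH z a"
proof -
  have "HH (Pj a b z) a = HH z a * inverse (hcnj (HH a b)) * HH b a"
    using nsq_zero_HH[OF assms(1)] by (simp add: Pj_def HH_span_left)
  also have "\<dots> = HH z a" using assms(3) by (simp add: HH_sym[of b a] mult.assoc)
  finally show ?thesis .
qed

lemma Pj_b:
  assumes "nsq a = 0" "nsq b = 0" "HH a b \<noteq> 0"
  shows "HH (Pj a b z) b = HH z b"
proof -
  have "HH (Pj a b z) b = HH z b * inverse (HH a b) * HH a b"
    using nsq_zero_HH[OF assms(2)] by (simp add: Pj_def HH_span_left)
  also have "\<dots> = HH z b" using assms(3) by (simp add: mult.assoc)
  finally show ?thesis .
qed

lemma span_orth:
  assumes "HH u a = 0" "HH u b = 0"
  shows "HH u (sm l a + sm m b) = 0" "HH (sm l a + sm m b) u = 0"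
  using assms HH_orth_sym[OF assms(1)] HH_orth_sym[OF assms(2)]
  by (simp_all add: HH_span_left HH_span_right)

lemma Pj_orth:
  assumes "nsq a = 0" "nsq b = 0" "HH a b \<noteq> 0"
  shows "HH (z - Pj a b z) a = 0" "HH (z - Pj a b z) b = 0"
  using Pj_a[OF assms] Pj_b[OF assms] by (simp_all add: HH_diff_left)

lemma Pj_sm: "Pj a b (sm k z) = sm k (Pj a b z)"
  by (simp add: Pj_def HH_sm_left sm_add mult.assoc)

lemma Pj_is_span: "\<exists>l m. Pj a b z = sm l a + sm m b"
  unfolding Pj_def by blast

lemma mem_qspan2: "x \<in> qspan2 a b \<longleftrightarrow> (\<exists>l m. x = sm l a + sm m b)"
proof
  assume "x \<in> qspan2 a b"
  then obtain \<alpha> \<beta> where "x = qsmul \<alpha> a + qsmul \<beta> b" by (auto simp: qspan2_def)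
  then show "\<exists>l m. x = sm l a + sm m b" by (auto simp: qsmul_sm)
next
  assume "\<exists>l m. x = sm l a + sm m b"
  then obtain l m where "x = sm l a + sm m b" by blast
  then have "x = qsmul (Rv l) a + qsmul (Rv m) b" by (simp add: sm_def)
  then show "x \<in> qspan2 a b" by (auto simp: qspan2_def)
qed

lemma span_sm: "sm k (sm l a + sm m b) = sm (k * l) a + sm (k * m) b"
  by (simp add: sm_add)

lemma nsq_decomp:
  assumes "nsq a = 0" "nsq b = 0" "HH a b \<noteq> 0"
  shows "nsq z = nsq (Pj a b z) + nsq (z - Pj a b z)"
proof -
  define u where "u = z - Pj a b z"
  define w where "w = Pj a b z"
  obtain l m where lm: "w = sm l a + sm m b" using Pj_is_span w_def by blast
  have ua: "HH u a = 0" "HH u b = 0" using Pj_orth[OF assms] by (simp_all add: u_def w_def)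
  have o1: "HH u w = 0" "HH w u = 0"
    using span_orth[OF ua, of l m] lm by simp_all
  have "hr (nsq z) = HH (w + u) (w + u)" by (simp add: u_def w_def HH_self_nsq)
  also have "\<dots> = HH w w + HH u u" using o1 by (simp add: HH_add2)
  also have "\<dots> = hr (nsq w) + hr (nsq u)" by (simp add: HH_self_nsq)
  finally show ?thesis by (simp add: hr_add[symmetric] u_def w_def)
qed

lemma mem_qline: "z \<in> qline v \<longleftrightarrow> (\<exists>k. z = sm k v)"
  by (simp add: qline_sm)

lemma line_elem:
  assumes "z \<in> qline v" "z \<noteq> 0"
  shows "\<exists>k. k \<noteq> 0 \<and> z = sm k v"
proof -
  obtain k where k: "z = sm k v" using assms(1) by (auto simp: mem_qline)
  then have "k \<noteq> 0" using assms(2) by auto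
  then show ?thesis using k by blast
qed

lemma line_eq:
  assumes "z \<in> qline v" "z \<noteq> 0"
  shows "qline z = qline v"
proof -
  obtain k where k: "k \<noteq> 0" "z = sm k v" using line_elem[OF assms] by blast
  then show ?thesis using qline_sm_eq[OF k(1)] by simp
qed

lemma line_lift:
  assumes "p = qline v" "v \<noteq> 0"
  shows "lift p \<in> p" "lift p \<noteq> 0"
proof -
  have "v \<in> qline v" by (simp add: mem_qline) (metis sm_1)
  then have "v \<in> p \<and> v \<noteq> 0" using assms by simp
  then have "lift p \<in> p \<and> lift p \<noteq> 0" unfolding lift_def by (rule someI)
  then show "lift p \<in> p" "lift p \<noteq> 0" by auto
qed

lemma line_elem2:
  assumes "y \<in> qline v" "y \<noteq> 0" "z \<in> qline v" "z \<noteq> 0"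
  shows "\<exists>k. k \<noteq> 0 \<and> y = sm k z"
proof -
  obtain k1 where k1: "k1 \<noteq> 0" "y = sm k1 v" using line_elem[OF assms(1,2)] by blast
  obtain k2 where k2: "k2 \<noteq> 0" "z = sm k2 v" using line_elem[OF assms(3,4)] by blast
  have "y = sm (k1 * inverse k2) z" using k1 k2 by (simp add: mult.assoc)
  moreover have "k1 * inverse k2 \<noteq> 0" using k1 k2 by simp
  ultimately show ?thesis by blast
qed

lemma herm_self_eq: "herm v v = 0 \<longleftrightarrow> nsq v = 0"
  by (metis HH_def HH_self_nsq Qv_eq0 hr_eq0)
lemma herm_self1: "herm v v $ 1 = nsq v" by (simp add: nsq_def)

lemma hyp_char: "p \<in> hyp \<longleftrightarrow> (\<exists>v. p = qline v \<and> nsq v < 0)"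
  by (simp add: hyp_def herm_self1)
lemma bdry_char: "p \<in> bdry \<longleftrightarrow> (\<exists>v. p = qline v \<and> v \<noteq> 0 \<and> nsq v = 0)"
  by (simp add: bdry_def herm_self_eq)

lemma nsq_neg_nz: "nsq v < 0 \<Longrightarrow> v \<noteq> 0" by (auto simp: nsq_eq)

lemma nsq_line:
  assumes "z \<in> qline v" "z \<noteq> 0"
  shows "nsq z < 0 \<longleftrightarrow> nsq v < 0" "nsq z = 0 \<longleftrightarrow> nsq v = 0"
proof -
  obtain k where k: "k \<noteq> 0" "z = sm k v" using line_elem[OF assms] by blast
  have "hns k > 0" using k hns_pos by simp
  then show "nsq z < 0 \<longleftrightarrow> nsq v < 0" "nsq z = 0 \<longleftrightarrow> nsq v = 0" using k
    by (simp_all add: nsq_sm mult_less_0_iff)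
qed

lemma hyp_not_bdry: "p \<in> hyp \<Longrightarrow> p \<notin> bdry"
proof
  assume h: "p \<in> hyp" "p \<in> bdry"
  obtain v where v: "p = qline v" "nsq v < 0" using h(1) unfolding hyp_char by blast
  obtain w where w: "p = qline w" "w \<noteq> 0" "nsq w = 0" using h(2) unfolding bdry_char by blast
  have "v \<in> qline v" by (simp add: mem_qline) (metis sm_1)
  then have vw: "v \<in> qline w" using v w by simp
  have nz: "v \<noteq> 0" using nsq_neg_nz v(2) by blast
  have "nsq v = 0" using nsq_line(2)[OF vw nz] w(3) by simp
  with v(2) show False by simp
qed

definition hdd :: "'n::finite qvec \<Rightarrow> 'n qvec \<Rightarrow> real" where
  "hdd z w = 2 * arcosh (norm (herm z w) / sqrt (herm z z $ 1 * herm w w $ 1))"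

lemma norm_herm: "norm (herm z w) = sqrt (hns (HH z w))"
  by (simp add: norm_quat HH_def)

lemma hdd_ratio: "hdd z w = 2 * arcosh (sqrt (hns (HH z w) / (nsq z * nsq w)))"
  by (simp add: hdd_def norm_herm herm_self1 real_sqrt_divide)

lemma hdd_sm:
  assumes "k \<noteq> 0" "m \<noteq> 0"
  shows "hdd (sm k z) (sm m w) = hdd z w"
proof -
  have pk: "hns k > 0" "hns m > 0" using assms hns_pos by auto
  have "hns (HH (sm k z) (sm m w)) / (nsq (sm k z) * nsq (sm m w))
      = (hns k * hns m * hns (HH z w)) / (hns k * hns m * (nsq z * nsq w))"
    by (simp add: HH_sm_left HH_sm_right hns_mult nsq_sm algebra_simps)
  also have "\<dots> = hns (HH z w) / (nsq z * nsq w)" using pk by simp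
  finally show ?thesis by (simp add: hdd_ratio)
qed

lemma hdist_any:
  assumes "p = qline v" "v \<noteq> 0" "q = qline v'" "v' \<noteq> 0"
    and "z \<in> p" "z \<noteq> 0" "w \<in> q" "w \<noteq> 0"
  shows "hdist p q = hdd z w"
proof -
  obtain k where k: "k \<noteq> 0" "lift p = sm k z"
    using line_elem2[of "lift p" v z] line_lift[OF assms(1,2)] assms by auto
  obtain m where m: "m \<noteq> 0" "lift q = sm m w"
    using line_elem2[of "lift q" v' w] line_lift[OF assms(3,4)] assms by auto
  have "hdist p q = hdd (lift p) (lift q)" by (simp add: hdist_def hdd_def Let_def)
  also have "\<dots> = hdd z w" using k m hdd_sm by simp
  finally show ?thesis .
qed


lemma arcosh_sqrt_mono:
  assumes "1 \<le> x" "x \<le> y" shows "arcosh (sqrt x) \<le> arcosh (sqrt y)"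
proof -
  have s: "1 \<le> sqrt x" "1 \<le> sqrt y" "sqrt x \<le> sqrt y" using assms by auto
  show ?thesis
  proof (rule ccontr)
    assume "\<not> ?thesis"
    then have "arcosh (sqrt y) < arcosh (sqrt x)" by simp
    then have "sqrt y < sqrt x" using arcosh_less_iff_real[OF s(2) s(1)] by blast
    then show False using s(3) by simp
  qed
qed
lemma arcosh_sqrt_inj:
  assumes "1 \<le> x" "1 \<le> y" "arcosh (sqrt x) = arcosh (sqrt y)" shows "x = y"
proof -
  have s: "1 \<le> sqrt x" "1 \<le> sqrt y" using assms by auto
  have "\<not> sqrt x < sqrt y" "\<not> sqrt y < sqrt x"
    using arcosh_less_iff_real[OF s(1) s(2)] arcosh_less_iff_real[OF s(2) s(1)] assms(3) by auto
  then have "sqrt x = sqrt y" by simp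
  then show ?thesis by simp
qed

lemma span_line_sub:
  assumes "w \<in> qspan2 a b" shows "qline w \<subseteq> qspan2 a b"
proof
  fix x assume "x \<in> qline w"
  then obtain k where k: "x = sm k w" by (auto simp: mem_qline)
  obtain l m where "w = sm l a + sm m b" using assms by (auto simp: mem_qspan2)
  then have "x = sm (k * l) a + sm (k * m) b" using k by (simp add: span_sm)
  then show "x \<in> qspan2 a b" by (auto simp: mem_qspan2)
qed

lemma self_in_line: "v \<in> qline v" by (simp add: mem_qline) (metis sm_1)

lemma proj_eq:
  assumes a: "nsq a = 0" "a \<noteq> 0" and b: "nsq b = 0" "b \<noteq> 0" and h: "HH a b \<noteq> 0"
    and y: "nsq y < 0"
  shows "proj {p \<in> hyp. p \<subseteq> qspan2 a b} (qline y) = qline (Pj a b y)"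
proof -
  define S where "S = {p \<in> hyp. p \<subseteq> qspan2 a b}"
  define w where "w = Pj a b y"
  define u where "u = y - w"
  have ua: "HH u a = 0" "HH u b = 0" using Pj_orth[OF a(1) b(1) h] by (simp_all add: u_def w_def)
  have nu: "nsq u \<ge> 0" using null_orth(1)[OF a ua(1)] .
  have dec: "nsq y = nsq w + nsq u" unfolding u_def w_def by (rule nsq_decomp[OF a(1) b(1) h])
  have nw: "nsq w < 0" using dec nu y by linarith
  have wle: "nsq w \<le> nsq y" using dec nu by linarith
  have wspan: "w \<in> qspan2 a b" using Pj_is_span[of a b y] by (auto simp: mem_qspan2 w_def)
  have wS: "qline w \<in> S" using span_line_sub[OF wspan] nw unfolding S_def hyp_char by blast
  have ynz: "y \<noteq> 0" using nsq_neg_nz[OF y] .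
  have wnz: "w \<noteq> 0" using nsq_neg_nz[OF nw] .
  define R where "R g = hns (HH y g) / (nsq y * nsq g)" for g
  have Rw: "R w = nsq w / nsq y"
  proof -
    have "HH y w = hr (nsq w)"
      using span_orth(1)[OF ua] Pj_is_span[of a b y]
      by (auto simp: u_def w_def HH_diff_left HH_self_nsq)
    then show ?thesis using nw by (simp add: R_def power2_eq_square)
  qed
  have Rw1: "R w \<ge> 1" using Rw nw wle y by (simp add: le_divide_eq)
  have HHg: "HH y g = HH w g" if gs: "g \<in> qspan2 a b" for g
  proof -
    obtain l m where "g = sm l a + sm m b" using mem_qspan2[THEN iffD1, OF gs] by blast
    then have "HH u g = 0" using span_orth(1)[OF ua] by simp
    then show ?thesis by (simp add: u_def HH_diff_left)
  qed
  have Rg: "R g \<ge> R w" if "g \<in> qspan2 a b" "nsq g < 0" for g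
  proof -
    have "hns (HH w g) \<ge> nsq w * nsq g"
      using rcs(1)[OF nw, of g] by (metis HH_sym hns_hcnj)
    then have hw: "nsq w * nsq g \<le> hns (HH w g)" .
    have pos: "nsq y * nsq g > 0" using y that(2) by (simp add: mult_neg_neg)
    have "nsq w * nsq g / (nsq y * nsq g) \<le> hns (HH w g) / (nsq y * nsq g)"
      by (rule divide_right_mono[OF hw]) (use pos in simp)
    then have "nsq w / nsq y \<le> hns (HH w g) / (nsq y * nsq g)" using that(2) by simp
    then show ?thesis using Rw HHg[OF that(1)] by (simp add: R_def)
  qed
  have hdR: "hdd y g = 2 * arcosh (sqrt (R g))" for g by (simp add: hdd_ratio R_def)
  have dist_S: "hdist (qline y) q = hdd y g \<and> g \<in> qspan2 a b \<and> nsq g < 0 \<and> q = qline g"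
    if "q \<in> S" "q = qline g" "nsq g < 0" for q g
  proof -
    have "g \<in> qspan2 a b" using that self_in_line[of g] by (auto simp: S_def)
    moreover have "hdist (qline y) q = hdd y g"
    proof -
      have gnz: "g \<noteq> 0" using nsq_neg_nz[OF that(3)] .
      have gq: "g \<in> q" using that(2) self_in_line by simp
      show ?thesis by (rule hdist_any[OF refl ynz that(2) gnz self_in_line ynz gq gnz])
    qed
    ultimately show ?thesis using that by auto
  qed
  have dw: "hdist (qline y) (qline w) = hdd y w"
    by (rule hdist_any[OF refl ynz refl wnz self_in_line ynz self_in_line wnz])
  have min: "hdist (qline y) (qline w) \<le> hdist (qline y) q" if qS: "q \<in> S" for q
  proof -
    obtain g where g: "q = qline g" "nsq g < 0" using qS unfolding S_def hyp_char by blast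
    have "hdd y w \<le> hdd y g" using dist_S[OF qS g] Rg Rw1 arcosh_sqrt_mono by (simp add: hdR)
    moreover have "hdist (qline y) q = hdd y g" using dist_S[OF qS g] by blast
    ultimately show ?thesis using dw by simp
  qed
  have uniq: "p = qline w" if pS: "p \<in> S" and pm: "\<forall>q\<in>S. hdist (qline y) p \<le> hdist (qline y) q" for p
  proof -
    obtain g where g: "p = qline g" "nsq g < 0" using pS unfolding S_def hyp_char by blast
    have ds: "hdist (qline y) p = hdd y g" "g \<in> qspan2 a b" using dist_S[OF pS g] by auto
    have "hdd y g \<le> hdd y w" using pm wS ds dw by auto
    moreover have "hdd y w \<le> hdd y g" using min[OF pS] ds dw by simp
    ultimately have "arcosh (sqrt (R g)) = arcosh (sqrt (R w))" by (simp add: hdR)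
    then have "R g = R w" using arcosh_sqrt_inj Rw1 Rg[OF ds(2) g(2)] by auto
    then have "hns (HH w g) / (nsq y * nsq g) = nsq w / nsq y" using Rw HHg[OF ds(2)] by (simp add: R_def)
    then have "hns (HH w g) = nsq w * nsq g" using y g(2) by (simp add: field_simps)
    then have "hns (HH g w) = nsq w * nsq g" by (metis HH_sym hns_hcnj)
    then obtain k where k: "g = sm k w" using rcs(2)[OF nw] by blast
    have "k \<noteq> 0" using k nsq_neg_nz[OF g(2)] by auto
    then show ?thesis using g k qline_sm_eq by simp
  qed
  have "proj S (qline y) = qline w"
    unfolding proj_def
  proof (rule the_equality)
    show "qline w \<in> S \<and> (\<forall>q\<in>S. hdist (qline y) (qline w) \<le> hdist (qline y) q)"
      using wS min by blast
    fix p assume "p \<in> S \<and> (\<forall>q\<in>S. hdist (qline y) p \<le> hdist (qline y) q)"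
    then show "p = qline w" using uniq by blast
  qed
  then show ?thesis by (simp add: S_def w_def)
qed


lemma norm_qmul: "norm (qmul a b) = norm a * norm b"
  by (simp add: norm_quat hns_mult real_sqrt_mult)

lemma bb_qmul: "bounded_bilinear qmul"
proof
  fix a a' b b' :: quat and r :: real
  show "qmul (a + a') b = qmul a b + qmul a' b" by (simp flip: Qv_inj add: distrib_right)
  show "qmul a (b + b') = qmul a b + qmul a b'" by (simp flip: Qv_inj add: distrib_left)
  show "qmul (r *\<^sub>R a) b = r *\<^sub>R qmul a b" by (simp flip: Qv_inj add: Qv_scaleR mult.assoc)
  show "qmul a (r *\<^sub>R b) = r *\<^sub>R qmul a b"
    by (simp flip: Qv_inj add: Qv_scaleR mult.assoc hr_comm)
  show "\<exists>K. \<forall>a b. norm (qmul a b) \<le> norm a * norm b * K"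
    by (rule exI[of _ 1]) (simp add: norm_qmul)
qed

lemma tendsto_qmul:
  "(f \<longlongrightarrow> a) F \<Longrightarrow> (g \<longlongrightarrow> b) F \<Longrightarrow> ((\<lambda>x. qmul (f x) (g x)) \<longlongrightarrow> qmul a b) F"
  by (rule bounded_bilinear.tendsto[OF bb_qmul])

lemma bl_qcnj: "bounded_linear qcnj"
proof (rule bounded_linear_intro[where K=1])
  fix a b :: quat and r :: real
  show "qcnj (a + b) = qcnj a + qcnj b" by (simp flip: Qv_inj add: hcnj_add)
  show "qcnj (r *\<^sub>R a) = r *\<^sub>R qcnj a" by (simp flip: Qv_inj add: Qv_scaleR hcnj_mult hr_comm)
  show "norm (qcnj a) \<le> norm a * 1" by (simp add: norm_quat)
qed

lemma tendsto_qcnj: "(f \<longlongrightarrow> a) F \<Longrightarrow> ((\<lambda>x. qcnj (f x)) \<longlongrightarrow> qcnj a) F"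
  by (rule bounded_linear.tendsto[OF bl_qcnj])

lemma tendsto_herm:
  "(f \<longlongrightarrow> v) F \<Longrightarrow> ((\<lambda>x. herm (f x) b) \<longlongrightarrow> herm v b) F"
  unfolding herm_def
  by (intro tendsto_diff tendsto_sum tendsto_qmul tendsto_const tendsto_vec_nth tendsto_fst tendsto_snd)

lemma tendsto_qsmul:
  "(c \<longlongrightarrow> c0) F \<Longrightarrow> (f \<longlongrightarrow> v) F \<Longrightarrow> ((\<lambda>x. qsmul (c x) (f x)) \<longlongrightarrow> qsmul c0 v) F"
  unfolding qsmul_def
  by (intro tendsto_Pair tendsto_vec_lambda tendsto_qmul tendsto_vec_nth tendsto_fst tendsto_snd)

lemma Rv_mult: "Rv (Qv a * x) = qmul a (Rv x)"
  by (simp flip: Qv_inj)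

lemma Pj_quat: "Pj a b z = qsmul (qmul (herm z b) (Rv (inverse (HH a b)))) a
    + qsmul (qmul (herm z a) (Rv (inverse (hcnj (HH a b))))) b"
  by (simp add: Pj_def sm_def HH_def Rv_mult[symmetric])

lemma tendsto_Pj:
  "(f \<longlongrightarrow> v) F \<Longrightarrow> ((\<lambda>x. Pj a b (f x)) \<longlongrightarrow> Pj a b v) F"
  unfolding Pj_quat
  by (intro tendsto_add tendsto_qsmul tendsto_qmul tendsto_herm tendsto_const)

definition qinv :: "quat \<Rightarrow> quat" where "qinv a = Rv (inverse (Qv a))"

lemma qinv_eq: "qinv a = inverse ((norm a)^2) *\<^sub>R qcnj a"
  by (simp flip: Qv_inj add: qinv_def Qv_scaleR hinverse_eq norm_quat_sq)

lemma tendsto_qinv: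
  "(f \<longlongrightarrow> a) F \<Longrightarrow> a \<noteq> 0 \<Longrightarrow> ((\<lambda>x. qinv (f x)) \<longlongrightarrow> qinv a) F"
  unfolding qinv_eq
  by (intro tendsto_scaleR tendsto_inverse tendsto_power tendsto_norm tendsto_qcnj) auto

lemma zc_scaleR: "zc (t *\<^sub>R z) i = hr t * zc z i" by (simp add: zc_def Qv_scaleR)
lemma z0_scaleR: "z0 (t *\<^sub>R z) = hr t * z0 z" by (simp add: z0_def Qv_scaleR)
lemma sm_scaleR: "sm (hr t) z = t *\<^sub>R z"
  by (subst qvec_eq_iff) (simp add: zc_scaleR z0_scaleR)


lemma Pj_neg:
  assumes a: "nsq a = 0" "a \<noteq> 0" and b: "nsq b = 0" and h: "HH a b \<noteq> 0" and y: "nsq y < 0"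
  shows "nsq (Pj a b y) < 0"
proof -
  have ua: "HH (y - Pj a b y) a = 0" using Pj_orth[OF a(1) b h] by simp
  have "nsq (y - Pj a b y) \<ge> 0" using null_orth(1)[OF a ua] .
  then show ?thesis using nsq_decomp[OF a(1) b h, of y] y by linarith
qed

lemma w_cases:
  assumes a: "nsq a = 0" "a \<noteq> 0" and b: "nsq b = 0" and h: "HH a b \<noteq> 0" and c: "nsq c = 0"
  shows "Pj a b c = c \<or> nsq (Pj a b c) < 0"
proof -
  define u where "u = c - Pj a b c"
  have ua: "HH u a = 0" "HH u b = 0" using Pj_orth[OF a(1) b h] by (simp_all add: u_def)
  have nu: "nsq u \<ge> 0" using null_orth(1)[OF a ua(1)] .
  have dec: "nsq c = nsq (Pj a b c) + nsq u" unfolding u_def by (rule nsq_decomp[OF a(1) b h])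
  show ?thesis
  proof (cases "nsq u = 0")
    case True
    then obtain k where k: "u = sm k a" using null_orth(2)[OF a ua(1)] by blast
    then have "k * HH a b = 0" using ua(2) by (simp add: HH_sm_left)
    then have "k = 0" using h by simp
    then have "u = 0" using k by simp
    then show ?thesis by (simp add: u_def)
  next
    case False
    then show ?thesis using nu dec c by simp
  qed
qed

lemma hyp_or_bdry_line:
  assumes "p \<in> hyp \<or> p \<in> bdry" shows "\<exists>s. s \<noteq> 0 \<and> p = qline s"
  using assms nsq_neg_nz unfolding hyp_char bdry_char by blast

lemma e0_facts:
  fixes c :: "'n::finite qvec"
  defines "e0 \<equiv> (0::quat^'n, snd c)"
  shows "zc (c + t *\<^sub>R e0) i = zc c i" "z0 (c + t *\<^sub>R e0) = hr (1 + t) * z0 c"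
  by (simp_all add: e0_def zc_scaleR z0_scaleR, simp_all add: zc_def z0_def hr_add distrib_right Qv_scaleR)

lemma nsq_pert:
  fixes c :: "'n::finite qvec"
  assumes c: "nsq c = 0" "c \<noteq> 0" and t: "t > 0"
  shows "nsq (c + t *\<^sub>R (0::quat^'n, snd c)) < 0"
proof -
  have z: "z0 c \<noteq> 0" by (rule z0_nonzero) (use c in auto)
  have "nsq (c + t *\<^sub>R (0::quat^'n, snd c)) = (\<Sum>i\<in>UNIV. hns (zc c i)) - (1 + t)^2 * hns (z0 c)"
    by (simp only: nsq_eq e0_facts hr_mult_sel)
  also have "(\<Sum>i\<in>UNIV. hns (zc c i)) = hns (z0 c)" using c(1) by (simp add: nsq_eq)
  finally have e: "nsq (c + t *\<^sub>R (0::quat^'n, snd c)) = (1 - (1 + t)^2) * hns (z0 c)"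
    by (simp add: algebra_simps)
  have "(1 + t)^2 > 1" using t by (simp add: power2_eq_square) (smt (verit) mult_le_cancel_left1)
  moreover have "hns (z0 c) > 0" using z hns_pos by simp
  ultimately show ?thesis using e by (simp add: mult_neg_pos)
qed


lemma sm_quat: "sm k v = qsmul (Rv k) v" by (simp add: sm_def)

lemma proj_ext_eq:
  fixes a b c :: "'n::finite qvec"
  assumes a: "nsq a = 0" "a \<noteq> 0" and b: "nsq b = 0" "b \<noteq> 0" and h: "HH a b \<noteq> 0"
    and c: "nsq c = 0" "c \<noteq> 0"
  shows "proj_ext {p \<in> hyp. p \<subseteq> qspan2 a b} {p \<in> bdry. p \<subseteq> qspan2 a b} (qline c) = qline (Pj a b c)"
proof -
  define S where "S = {p \<in> hyp. p \<subseteq> qspan2 a b}"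
  define Sb where "Sb = {p \<in> bdry. p \<subseteq> qspan2 a b}"
  define w where "w = Pj a b c"
  have wc: "w = c \<or> nsq w < 0" using w_cases[OF a b(1) h c(1)] by (simp add: w_def)
  have wnz: "w \<noteq> 0" using wc c(2) nsq_neg_nz[of w] by blast
  have wle: "nsq w \<le> 0" using wc c(1) by auto
  have zw: "z0 w \<noteq> 0" using z0_nonzero[OF wle wnz] .
  have wspan: "w \<in> qspan2 a b" using Pj_is_span[of a b c] by (auto simp: mem_qspan2 w_def)
  have wmem: "qline w \<in> S \<union> Sb"
  proof (cases "w = c")
    case True
    then have "qline w \<in> bdry" using c unfolding bdry_char by blast
    then show ?thesis using span_line_sub[OF wspan] by (simp add: Sb_def)
  next
    case False
    then have "nsq w < 0" using wc by simp
    then have "qline w \<in> hyp" unfolding hyp_char by blast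
    then show ?thesis using span_line_sub[OF wspan] by (simp add: S_def)
  qed
  have projY: "proj S (Y k) = qline (Pj a b (V k)) \<and> nsq (V k) < 0"
    if Yh: "Y k \<in> hyp" and VY: "V k \<in> Y k" "V k \<noteq> 0" for Y V k
  proof -
    obtain y where y: "Y k = qline y" "nsq y < 0" using Yh unfolding hyp_char by blast
    have nV: "nsq (V k) < 0" using nsq_line(1)[of "V k" y] VY y by simp
    have "Y k = qline (V k)" using line_eq[of "V k" y] VY y by simp
    then show ?thesis using proj_eq[OF a b h nV] nV by (simp add: S_def)
  qed
  have exist: "pconv (\<lambda>k. proj S (Y k)) (qline w)"
    if Yh: "\<forall>k. Y k \<in> hyp" and pc: "pconv Y (qline c)" for Y
  proof -
    obtain V v where Vv: "v \<in> qline c" "v \<noteq> 0" "\<forall>k. V k \<in> Y k \<and> V k \<noteq> 0" "V \<longlonglongrightarrow> v"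
      using pc unfolding pconv_def by blast
    have pk: "proj S (Y k) = qline (Pj a b (V k))" "nsq (V k) < 0" for k
      using projY[of Y k V] Yh Vv(3) by auto
    obtain k0 where k0: "k0 \<noteq> 0" "v = sm k0 c" using line_elem[OF Vv(1,2)] by blast
    have pv: "Pj a b v = sm k0 w" using k0 by (simp add: Pj_sm w_def)
    have "Pj a b v \<in> qline w" using pv by (auto simp: mem_qline)
    moreover have "Pj a b v \<noteq> 0" using pv k0 wnz by (simp add: sm_eq0)
    moreover have "\<forall>k. Pj a b (V k) \<in> proj S (Y k) \<and> Pj a b (V k) \<noteq> 0"
      using pk Pj_neg[OF a b(1) h] nsq_neg_nz self_in_line by metis
    moreover have "(\<lambda>k. Pj a b (V k)) \<longlonglongrightarrow> Pj a b v" by (rule tendsto_Pj[OF Vv(4)])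
    ultimately have calc: "Pj a b v \<in> qline w \<and> Pj a b v \<noteq> 0 \<and>
      (\<forall>k. Pj a b (V k) \<in> proj S (Y k) \<and> Pj a b (V k) \<noteq> 0) \<and> (\<lambda>k. Pj a b (V k)) \<longlonglongrightarrow> Pj a b v"
      by blast
    show ?thesis unfolding pconv_def
      apply (rule exI[of _ "\<lambda>k. Pj a b (V k)"])
      apply (rule exI[of _ "Pj a b v"])
      using calc by blast
  qed
  have uniq: "p = qline w" if pS: "p \<in> S \<union> Sb"
    and pP: "\<forall>Y. (\<forall>k. Y k \<in> hyp) \<and> pconv Y (qline c) \<longrightarrow> pconv (\<lambda>k. proj S (Y k)) p" for p
  proof -
    define e0 where "e0 = ((0::quat^'n), snd c)"
    define V where "V k = c + inverse (real (Suc k)) *\<^sub>R e0" for k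
    have nV: "nsq (V k) < 0" for k unfolding V_def e0_def by (rule nsq_pert[OF c]) simp
    have Vc: "V \<longlonglongrightarrow> c"
    proof -
      have "(\<lambda>k. c + inverse (real (Suc k)) *\<^sub>R e0) \<longlonglongrightarrow> c + 0 *\<^sub>R e0"
        by (intro tendsto_intros LIMSEQ_inverse_real_of_nat)
      then show ?thesis unfolding V_def[abs_def] by simp
    qed
    define Y where "Y k = qline (V k)" for k
    have Yh: "\<forall>k. Y k \<in> hyp" using nV unfolding Y_def hyp_char by blast
    have "pconv Y (qline c)" unfolding pconv_def
      apply (rule exI[of _ V])
      apply (rule exI[of _ c])
      using self_in_line[of c] c(2) self_in_line nsq_neg_nz[OF nV] Vc unfolding Y_def by blast
    then have "pconv (\<lambda>k. proj S (Y k)) p" using pP Yh by blast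
    then obtain W v' where Wv: "v' \<in> p" "v' \<noteq> 0" "\<forall>k. W k \<in> proj S (Y k) \<and> W k \<noteq> 0" "W \<longlonglongrightarrow> v'"
      unfolding pconv_def by blast
    define pi where "pi k = Pj a b (V k)" for k
    have pY: "proj S (Y k) = qline (pi k)" for k
    proof -
      have "V k \<in> Y k" unfolding Y_def by (rule self_in_line)
      then show ?thesis using projY[of Y k V] Yh nsq_neg_nz[OF nV] by (simp add: pi_def)
    qed
    have npi: "nsq (pi k) < 0" for k using Pj_neg[OF a b(1) h nV] by (simp add: pi_def)
    have zpi: "z0 (pi k) \<noteq> 0" for k using z0_nonzero[OF less_imp_le[OF npi[of k]] nsq_neg_nz[OF npi[of k]]] .
    have Wk: "W k = qsmul (qmul (snd (W k)) (qinv (snd (pi k)))) (pi k)" for k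
    proof -
      obtain kk where kk: "W k = sm kk (pi k)" using Wv(3) pY line_elem by metis
      then have "z0 (W k) = kk * z0 (pi k)" by simp
      then have "kk = z0 (W k) * inverse (z0 (pi k))" using zpi[of k] by (simp add: mult.assoc)
      then have "W k = sm (z0 (W k) * inverse (z0 (pi k))) (pi k)" using kk by simp
      then show ?thesis by (simp add: sm_quat z0_def qinv_def Rv_mult)
    qed
    have pic: "pi \<longlonglongrightarrow> w" unfolding pi_def w_def by (rule tendsto_Pj[OF Vc])
    have "(\<lambda>k. qsmul (qmul (snd (W k)) (qinv (snd (pi k)))) (pi k))
        \<longlonglongrightarrow> qsmul (qmul (snd v') (qinv (snd w))) w"
      using zw by (intro tendsto_qsmul tendsto_qmul tendsto_qinv tendsto_snd Wv(4) pic) (simp add: z0_def)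
    then have "W \<longlonglongrightarrow> qsmul (qmul (snd v') (qinv (snd w))) w" using Wk by simp
    then have v'eq: "v' = qsmul (qmul (snd v') (qinv (snd w))) w" using Wv(4) LIMSEQ_unique by blast
    define kk where "kk = Qv (qmul (snd v') (qinv (snd w)))"
    have v'sm: "v' = sm kk w" using v'eq by (simp add: kk_def qsmul_sm)
    then have kknz: "kk \<noteq> 0" using Wv(2) by auto
    have "p \<in> hyp \<or> p \<in> bdry" using pS by (auto simp: S_def Sb_def)
    then obtain s where s: "s \<noteq> 0" "p = qline s" using hyp_or_bdry_line by blast
    have "qline v' = p" using line_eq[of v' s] Wv(1,2) s by simp
    moreover have "qline v' = qline w" using v'sm kknz qline_sm_eq by simp
    ultimately show ?thesis by simp
  qed
  have "proj_ext S Sb (qline c) = qline w"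
    unfolding proj_ext_def
  proof (rule the_equality)
    show "qline w \<in> S \<union> Sb \<and>
      (\<forall>Y. (\<forall>k. Y k \<in> hyp) \<and> pconv Y (qline c) \<longrightarrow> pconv (\<lambda>k. proj S (Y k)) (qline w))"
      using wmem exist by blast
    fix p assume "p \<in> S \<union> Sb \<and>
      (\<forall>Y. (\<forall>k. Y k \<in> hyp) \<and> pconv Y (qline c) \<longrightarrow> pconv (\<lambda>k. proj S (Y k)) p)"
    then show "p = qline w" using uniq by blast
  qed
  then show ?thesis by (simp add: S_def Sb_def w_def)
qed


lemma qis_real_iff: "qis_real x \<longleftrightarrow> Qv x = hr (x$1)"
  by (auto simp: qis_real_def hr_def Qv_def)

lemma h1_mult_hr: "h1 (x * hr r) = r * h1 x" by (simp add: algebra_simps)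
lemma h1_hr_mult: "h1 (hr r * x) = r * h1 x" by simp

lemma hns_diff: "hns (x - y) = hns x - 2 * h1 (x * hcnj y) + hns y"
  by (simp add: hns_def power2_eq_square algebra_simps)

lemma hcnj_inv_hcnj: "hcnj (inverse (hcnj h)) = inverse h"
  by (simp add: hcnj_inverse)

lemma bdry_lift:
  assumes "x \<in> bdry" shows "lift x \<noteq> 0" "nsq (lift x) = 0" "x = qline (lift x)"
proof -
  obtain v where v: "x = qline v" "v \<noteq> 0" "nsq v = 0" using assms unfolding bdry_char by blast
  have l: "lift x \<in> x" "lift x \<noteq> 0" using line_lift[OF v(1,2)] by auto
  show "lift x \<noteq> 0" using l by simp
  show "nsq (lift x) = 0" using nsq_line(2)[of "lift x" v] l v by simp
  show "x = qline (lift x)" using line_eq[of "lift x" v] l v by simp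
qed

lemma hyp_line_neg:
  assumes "qline g \<in> hyp" shows "nsq g < 0"
proof -
  obtain v where v: "qline g = qline v" "nsq v < 0" using assms unfolding hyp_char by blast
  have "v \<in> qline g" using v self_in_line by simp
  then obtain k where k: "v = sm k g" by (auto simp: mem_qline)
  have "nsq v = hns k * nsq g" using k nsq_sm by simp
  then show ?thesis using v(2) hns_nonneg[of k]
    by (metis mult_nonneg_nonneg not_le)
qed

lemma sigma_eq:
  assumes "nsq a = 0" "nsq b = 0" "HH a b \<noteq> 0"
  shows "nsq (Pj a b c) = 2 * h1 (HH c b * inverse (HH a b) * hcnj (HH c a))"
proof -
  define h where "h = HH a b"
  have "HH c b * inverse h * h * hcnj (HH c a * inverse (hcnj h))
      = HH c b * (inverse h * h) * (inverse h * hcnj (HH c a))"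
    by (simp add: hcnj_mult hcnj_inv_hcnj mult.assoc)
  also have "\<dots> = HH c b * inverse h * hcnj (HH c a)"
    using assms(3) by (simp add: h_def mult.assoc)
  finally have e: "HH c b * inverse h * h * hcnj (HH c a * inverse (hcnj h)) = HH c b * inverse h * hcnj (HH c a)" .
  show ?thesis unfolding Pj_def nsq_span[OF assms(1,2)] using e by (simp add: h_def)
qed

lemma sigma_ReT:
  assumes "h \<noteq> 0"
  shows "h1 (p * inverse h * hcnj q) = h1 (h * hcnj p * q) / hns h"
proof -
  have "p * inverse h * hcnj q = p * (hr (inverse (hns h)) * hcnj h) * hcnj q" by (simp add: hinverse_eq)
  also have "\<dots> = hr (inverse (hns h)) * (p * hcnj h * hcnj q)"
    by (simp add: mult.assoc) (metis hr_comm mult.assoc)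
  finally have "h1 (p * inverse h * hcnj q) = inverse (hns h) * h1 (p * hcnj h * hcnj q)" by simp
  also have "h1 (p * hcnj h * hcnj q) = h1 (hcnj (q * h * hcnj p))" by (simp add: hcnj_mult mult.assoc)
  also have "\<dots> = h1 (q * (h * hcnj p))" by (simp add: mult.assoc)
  also have "\<dots> = h1 (h * hcnj p * q)" by (rule h1_comm)
  finally show ?thesis by (simp add: divide_inverse mult.commute)
qed

lemma h1_qY: "h1 (q * hcnj (p * inverse h)) = h1 (p * inverse h * hcnj q)"
proof -
  have "hcnj (p * inverse h * hcnj q) = q * hcnj (p * inverse h)" by (simp add: hcnj_mult)
  then show ?thesis by (metis hcnj_sel(1))
qed


lemma geod_rho:
  assumes a: "nsq a = 0" and b: "nsq b = 0" and h: "HH a b \<noteq> 0"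
    and lam: "lam \<noteq> 0" and r: "r > 0"
    and rel: "lam * HH a b * hcnj mu = hr (- (r * hns lam))"
  shows "hdd (Pj a b c) (sm lam a + sm mu b) =
    2 * arcosh (sqrt ((hns (HH c a) - r * nsq (Pj a b c) + r^2 * hns (HH c b * inverse (HH a b)))
        / (- 2 * r * nsq (Pj a b c))))"
proof -
  define w where "w = Pj a b c"
  define q where "q = HH c a"
  define p where "p = HH c b"
  define hh where "hh = HH a b"
  define Y where "Y = p * inverse hh"
  define N where "N = nsq w"
  define g where "g = sm lam a + sm mu b"
  have hl: "hns lam > 0" using lam hns_pos by simp
  have wa: "HH w a = q" "HH w b = p" using Pj_a[OF a b h] Pj_b[OF a b h] by (simp_all add: w_def q_def p_def)
  have lh: "lam * hh \<noteq> 0" using lam h by (simp add: hh_def)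
  have "inverse (lam * hh) * (lam * hh * hcnj mu) = (inverse (lam * hh) * (lam * hh)) * hcnj mu"
    by (simp only: mult.assoc)
  then have "hcnj mu = inverse (lam * hh) * (lam * hh * hcnj mu)"
    using left_inverse[OF lh] by simp
  also have "\<dots> = inverse hh * (inverse lam * hr (- (r * hns lam)))"
    using rel lam h by (simp add: hh_def nonzero_inverse_mult_distrib mult.assoc)
  also have "inverse lam * hr (- (r * hns lam)) = hr (- r) * hcnj lam"
  proof -
    have "inverse lam * hr (- (r * hns lam)) = hr (inverse (hns lam)) * (hcnj lam * hr (- (r * hns lam)))"
      by (simp add: hinverse_eq mult.assoc)
    also have "\<dots> = hr (inverse (hns lam)) * hr (- (r * hns lam)) * hcnj lam"
      using hr_comm[of "- (r * hns lam)" "hcnj lam"] by (simp add: mult.assoc)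
    also have "hr (inverse (hns lam)) * hr (- (r * hns lam)) = hr (- r)"
      using hl by (simp add: hr_mult[symmetric])
    finally show ?thesis .
  qed
  finally have mu: "hcnj mu = inverse hh * (hr (- r) * hcnj lam)" .
  have "HH w g = q * hcnj lam + p * hcnj mu" by (simp add: g_def HH_span_right wa)
  also have "p * hcnj mu = hr (- r) * Y * hcnj lam"
    by (simp add: mu Y_def mult.assoc) (metis hr_comm mult.assoc)
  also have "q * hcnj lam + hr (- r) * Y * hcnj lam = (q - hr r * Y) * hcnj lam"
    by (simp add: hr_minus algebra_simps)
  finally have HHwg: "HH w g = (q - hr r * Y) * hcnj lam" .
  have ng: "nsq g = - 2 * r * hns lam"
    unfolding g_def nsq_span[OF a b] using rel by (simp add: hh_def)
  have s: "h1 (q * hcnj Y) = N / 2"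
    using sigma_eq[OF a b h, of c] h1_qY[of q p hh] by (simp add: N_def w_def q_def p_def hh_def Y_def)
  have hq: "hns (q - hr r * Y) = hns q - r * N + r^2 * hns Y"
  proof -
    have "h1 (q * hcnj (hr r * Y)) = r * h1 (q * hcnj Y)"
      by (simp add: hcnj_mult mult.assoc[symmetric] h1_mult_hr)
    then show ?thesis using s by (simp add: hns_diff)
  qed
  have "hdd w g = 2 * arcosh (sqrt (hns (HH w g) / (nsq w * nsq g)))" by (rule hdd_ratio)
  also have "hns (HH w g) / (nsq w * nsq g) = (hns (q - hr r * Y) * hns lam) / (N * (- 2 * r * hns lam))"
    by (simp add: HHwg hns_mult ng N_def)
  also have "\<dots> = hns (q - hr r * Y) / (- 2 * r * N)"
    using hl by (simp add: field_simps)
  finally have "hdd w g = 2 * arcosh (sqrt (hns (q - hr r * Y) / (- 2 * r * N)))" .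
  then have "hdd w g = 2 * arcosh (sqrt ((hns q - r * N + r^2 * hns Y) / (- 2 * r * N)))"
    unfolding hq .
  then show ?thesis by (simp add: w_def g_def q_def Y_def p_def hh_def N_def)
qed


lemma rho_bound:
  fixes N r nq nY :: real
  assumes "N < 0" "r > 0"
  shows "(nq^2 - r * N + r^2 * nY^2) / (- 2 * r * N) \<ge> 1/2 + nq * nY / (- N)"
proof -
  have d: "- 2 * r * N > 0" using assms by (simp add: mult_pos_neg)
  have "(nq^2 - r * N + r^2 * nY^2) - (1/2 + nq * nY / (- N)) * (- 2 * r * N) = (nq - r * nY)^2"
    using assms by (simp add: field_simps power2_eq_square)
  then have "(1/2 + nq * nY / (- N)) * (- 2 * r * N) \<le> (nq^2 - r * N + r^2 * nY^2)"
    by (smt (verit) zero_le_power2)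
  then show ?thesis using pos_le_divide_eq[OF d] by blast
qed

lemma rho_witness:
  fixes N nq nY :: real
  assumes "N < 0" "nq > 0" "nY > 0"
  shows "(nq^2 - (nq / nY) * N + (nq / nY)^2 * nY^2) / (- 2 * (nq / nY) * N) = 1/2 + nq * nY / (- N)"
  using assms by (simp add: field_simps power2_eq_square)

lemma sinh_final:
  fixes K :: real
  assumes "K \<ge> 1"
  shows "sinh (2 * arcosh (sqrt ((1 + K) / 2))) = sqrt (K^2 - 1)"
proof -
  define t where "t = sqrt ((1 + K) / 2)"
  have t1: "t \<ge> 1" using assms by (simp add: t_def)
  have t2: "t^2 = (1 + K) / 2" using assms by (simp add: t_def)
  have "sinh (2 * arcosh t) = 2 * sinh (arcosh t) * cosh (arcosh t)" by (rule sinh_double)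
  also have "\<dots> = 2 * sqrt (t^2 - 1) * t" using t1 by (simp add: sinh_arcosh_real)
  also have "\<dots> = sqrt (4 * (t^2 - 1) * t^2)"
  proof -
    have "sqrt (4 * (t^2 - 1) * t^2) = sqrt 4 * sqrt (t^2 - 1) * sqrt (t^2)" by (simp only: real_sqrt_mult)
    also have "sqrt 4 = (2::real)" by (simp add: real_sqrt_four)
    also have "sqrt (t^2) = t" using t1 by simp
    finally show ?thesis by simp
  qed
  also have "4 * (t^2 - 1) * t^2 = K^2 - 1"
  proof -
    have K: "K = 2 * t^2 - 1" using t2 by simp
    show ?thesis by (simp add: K power2_eq_square algebra_simps)
  qed
  finally show ?thesis by (simp add: t_def)
qed

lemma tan_final:
  fixes X :: real
  assumes "0 < X" "X \<le> 1"
  shows "tan (arccos X) = sqrt ((1 / X)^2 - 1)" "arccos X < pi / 2"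
proof -
  have "tan (arccos X) = sqrt (1 - X^2) / X"
    using assms by (simp add: tan_def sin_arccos_abs cos_arccos)
  also have "\<dots> = sqrt ((1 - X^2) / X^2)" using assms by (simp add: real_sqrt_divide)
  also have "(1 - X^2) / X^2 = (1 / X)^2 - 1" using assms by (simp add: field_simps)
  finally show "tan (arccos X) = sqrt ((1 / X)^2 - 1)" .
  have "arccos X < arccos 0" by (rule arccos_less_arccos) (use assms in auto)
  then show "arccos X < pi / 2" by simp
qed


lemma qis_real_of: "Qv x = hr s \<Longrightarrow> qis_real x"
  by (auto simp: qis_real_def hr_def Qv_def)

lemma geod_ge:
  assumes a: "nsq a = 0" "a \<noteq> 0" and b: "nsq b = 0" "b \<noteq> 0" and h: "HH a b \<noteq> 0"
    and x1: "x1 = qline a" and x2: "x2 = qline b"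
    and N: "nsq (Pj a b c) < 0"
    and g: "g \<in> geod x1 x2"
  shows "\<exists>r>0. hdist (qline (Pj a b c)) g =
    2 * arcosh (sqrt ((hns (HH c a) - r * nsq (Pj a b c) + r^2 * hns (HH c b * inverse (HH a b)))
        / (- 2 * r * nsq (Pj a b c))))"
proof -
  obtain a' b' where ab: "g = qline (a' + b')" "a' \<in> x1" "b' \<in> x2" "a' \<noteq> 0" "b' \<noteq> 0"
    "qis_real (herm a' b')" "qline (a' + b') \<in> hyp"
    using g unfolding geod_def by blast
  obtain lam where lam: "lam \<noteq> 0" "a' = sm lam a" using line_elem[of a' a] ab x1 by blast
  obtain mu where mu: "mu \<noteq> 0" "b' = sm mu b" using line_elem[of b' b] ab x2 by blast
  define s where "s = herm a' b' $ 1"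
  have HHab: "HH a' b' = hr s" using ab(6) by (simp add: qis_real_iff HH_def s_def)
  have rel0: "lam * HH a b * hcnj mu = hr s"
    using HHab lam mu by (simp add: HH_sm_left HH_sm_right mult.assoc)
  have ng: "nsq (a' + b') < 0" using hyp_line_neg[OF ab(7)] .
  have "nsq (a' + b') = 2 * h1 (lam * HH a b * hcnj mu)"
    using lam mu nsq_span[OF a(1) b(1)] by simp
  then have s0: "s < 0" using ng rel0 by simp
  have hl: "hns lam > 0" using lam hns_pos by simp
  define r where "r = - s / hns lam"
  have r0: "r > 0" using s0 hl by (simp add: r_def divide_neg_pos)
  have rel: "lam * HH a b * hcnj mu = hr (- (r * hns lam))" using rel0 hl by (simp add: r_def)
  have wnz: "Pj a b c \<noteq> 0" using nsq_neg_nz[OF N] .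
  have gnz: "a' + b' \<noteq> 0" using nsq_neg_nz[OF ng] .
  have "hdist (qline (Pj a b c)) g = hdd (Pj a b c) (a' + b')"
  proof -
    have gi: "a' + b' \<in> g" using ab(1) self_in_line[of "a' + b'"] by simp
    show ?thesis by (rule hdist_any[OF refl wnz ab(1) gnz self_in_line wnz gi gnz])
  qed
  also have "\<dots> = hdd (Pj a b c) (sm lam a + sm mu b)" using lam mu by simp
  also have "\<dots> = 2 * arcosh (sqrt ((hns (HH c a) - r * nsq (Pj a b c) + r^2 * hns (HH c b * inverse (HH a b)))
        / (- 2 * r * nsq (Pj a b c))))"
    by (rule geod_rho[OF a(1) b(1) h lam(1) r0 rel])
  finally show ?thesis using r0 by blast
qed

lemma geod_witness:
  assumes a: "nsq a = 0" "a \<noteq> 0" and b: "nsq b = 0" "b \<noteq> 0" and h: "HH a b \<noteq> 0"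
    and x1: "x1 = qline a" and x2: "x2 = qline b"
    and N: "nsq (Pj a b c) < 0" and r0: "r0 > 0"
  shows "\<exists>g\<in>geod x1 x2. hdist (qline (Pj a b c)) g =
    2 * arcosh (sqrt ((hns (HH c a) - r0 * nsq (Pj a b c) + r0^2 * hns (HH c b * inverse (HH a b)))
        / (- 2 * r0 * nsq (Pj a b c))))"
proof -
  define mu where "mu = hr (- r0) * hcnj (inverse (HH a b))"
  have munz: "mu \<noteq> 0" using r0 h by (simp add: mu_def)
  have hmu: "hcnj mu = inverse (HH a b) * hr (- r0)" by (simp add: mu_def hcnj_mult)
  have rel: "1 * HH a b * hcnj mu = hr (- (r0 * hns 1))"
    using h by (simp add: hmu mult.assoc[symmetric] hns_def)
  define b' where "b' = sm mu b"
  have a1: "a \<in> x1" using x1 self_in_line by simp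
  have b1: "b' \<in> x2" using x2 by (auto simp: b'_def mem_qline)
  have b'nz: "b' \<noteq> 0" using munz b(2) by (simp add: b'_def sm_eq0)
  have HHab': "HH a b' = hr (- r0)"
    using rel by (simp add: b'_def HH_sm_right hns_def)
  have qr: "qis_real (herm a b')" using HHab' by (intro qis_real_of) (simp add: HH_def)
  have ng: "nsq (sm 1 a + sm mu b) = - 2 * r0"
    unfolding nsq_span[OF a(1) b(1)] using rel by (simp add: hns_def)
  then have ng': "nsq (a + b') < 0" using r0 by (simp add: b'_def)
  have hy: "qline (a + b') \<in> hyp" using ng' unfolding hyp_char by blast
  have gin: "qline (a + b') \<in> geod x1 x2"
    unfolding geod_def using a1 b1 a(2) b'nz qr hy by blast
  have wnz: "Pj a b c \<noteq> 0" using nsq_neg_nz[OF N] .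
  have gnz: "a + b' \<noteq> 0" using nsq_neg_nz[OF ng'] .
  have "hdist (qline (Pj a b c)) (qline (a + b')) = hdd (Pj a b c) (a + b')"
    by (rule hdist_any[OF refl wnz refl gnz self_in_line wnz self_in_line gnz])
  also have "\<dots> = hdd (Pj a b c) (sm 1 a + sm mu b)" by (simp add: b'_def)
  also have "\<dots> = 2 * arcosh (sqrt ((hns (HH c a) - r0 * nsq (Pj a b c) + r0^2 * hns (HH c b * inverse (HH a b)))
        / (- 2 * r0 * nsq (Pj a b c))))"
    by (rule geod_rho[OF a(1) b(1) h _ r0 rel]) simp
  finally show ?thesis using gin by blast
qed


theorem theorem3p4:
  fixes x1 x2 x3 :: "('n::finite) qvec set"
  assumes "x1 \<in> bdry" "x2 \<in> bdry" "x3 \<in> bdry"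
    and "x1 \<noteq> x2" "x2 \<noteq> x3" "x1 \<noteq> x3"
  shows "let P = proj_ext (QLine x1 x2) (QLine_bd x1 x2) x3 in
           (P \<in> QLine_bd x1 x2 \<longrightarrow> qcartan x1 x2 x3 = pi / 2) \<and>
           (P \<notin> QLine_bd x1 x2 \<longrightarrow>
              qcartan x1 x2 x3 < pi / 2 \<and>
              \<bar>tan (qcartan x1 x2 x3)\<bar> = sinh (hdist_set P (geod x1 x2)))"
proof -
  define a where "a = lift x1"
  define b where "b = lift x2"
  define c where "c = lift x3"
  have a: "nsq a = 0" "a \<noteq> 0" "x1 = qline a" using bdry_lift[OF assms(1)] by (auto simp: a_def)
  have b: "nsq b = 0" "b \<noteq> 0" "x2 = qline b" using bdry_lift[OF assms(2)] by (auto simp: b_def)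
  have c: "nsq c = 0" "c \<noteq> 0" "x3 = qline c" using bdry_lift[OF assms(3)] by (auto simp: c_def)
  have h: "HH a b \<noteq> 0"
  proof
    assume "HH a b = 0"
    then have "HH b a = 0" by (rule HH_orth_sym)
    then have "qline b = qline a" by (rule null_same_line[OF a(1,2) b(1,2)])
    then show False using a(3) b(3) assms(4) by simp
  qed
  have p: "HH c b \<noteq> 0"
  proof
    assume "HH c b = 0"
    then have "qline c = qline b" by (rule null_same_line[OF b(1,2) c(1,2)])
    then show False using b(3) c(3) assms(5) by simp
  qed
  have q: "HH c a \<noteq> 0"
  proof
    assume "HH c a = 0"
    then have "qline c = qline a" by (rule null_same_line[OF a(1,2) c(1,2)])
    then show False using a(3) c(3) assms(6) by simp
  qed
  define w where "w = Pj a b c"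
  have Peq: "proj_ext (QLine x1 x2) (QLine_bd x1 x2) x3 = qline w"
    using proj_ext_eq[OF a(1,2) b(1,2) h c(1,2)] c(3)
    by (simp add: QLine_def QLine_bd_def a_def b_def w_def)
  define T where "T = qmul (qmul (herm a b) (herm b c)) (herm c a)"
  have qc: "qcartan x1 x2 x3 = arccos (\<bar>T $ 1\<bar> / norm T)"
    by (simp add: qcartan_def Let_def a_def b_def c_def T_def)
  have QT: "Qv T = HH a b * hcnj (HH c b) * HH c a"
    by (simp add: T_def HH_def[symmetric] HH_sym[of b c])
  define ReT where "ReT = T $ 1"
  have ReT: "ReT = h1 (HH a b * hcnj (HH c b) * HH c a)" using QT by (simp add: ReT_def flip: Qv_sel(1))
  have hh: "hns (HH a b) > 0" using h hns_pos by simp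
  have hp: "hns (HH c b) > 0" using p hns_pos by simp
  have hq: "hns (HH c a) > 0" using q hns_pos by simp
  have nT: "norm T = sqrt (hns (HH a b)) * sqrt (hns (HH c b)) * sqrt (hns (HH c a))"
    by (simp add: norm_quat QT hns_mult real_sqrt_mult)
  have s1: "nsq w = 2 * h1 (HH c b * inverse (HH a b) * hcnj (HH c a))"
    unfolding w_def by (rule sigma_eq[OF a(1) b(1) h])
  have s2: "h1 (HH c b * inverse (HH a b) * hcnj (HH c a)) = ReT / hns (HH a b)"
    unfolding ReT by (rule sigma_ReT[OF h])
  have sig: "nsq w = 2 * ReT / hns (HH a b)"
    by (simp only: s1 s2 times_divide_eq_right)
  have wspan: "w \<in> qspan2 a b" using Pj_is_span[of a b c] by (auto simp: mem_qspan2 w_def)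
  have wc: "w = c \<or> nsq w < 0" using w_cases[OF a(1,2) b(1) h c(1)] by (simp add: w_def)
  show ?thesis
  proof (cases "w = c")
    case True
    then have "ReT = 0" using sig c(1) hh by simp
    then have qc2: "qcartan x1 x2 x3 = pi / 2" using qc by (simp add: ReT_def)
    have "x3 \<in> QLine_bd x1 x2"
      using assms(3) span_line_sub[OF wspan] True c(3) by (simp add: QLine_bd_def a_def b_def)
    then show ?thesis using qc2 Peq True c(3) by (simp add: Let_def)
  next
    case False
    then have N: "nsq w < 0" using wc by simp
    have Phyp: "qline w \<in> hyp" using N unfolding hyp_char by blast
    then have notbd: "qline w \<notin> QLine_bd x1 x2" using hyp_not_bdry by (auto simp: QLine_bd_def)
    have Rneg: "ReT < 0" using sig N hh by (simp add: divide_less_0_iff)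
    define nh where "nh = sqrt (hns (HH a b))"
    define np where "np = sqrt (hns (HH c b))"
    define nq where "nq = sqrt (hns (HH c a))"
    define Y where "Y = HH c b * inverse (HH a b)"
    define nY where "nY = sqrt (hns Y)"
    have pos: "nh > 0" "np > 0" "nq > 0" using hh hp hq by (simp_all add: nh_def np_def nq_def)
    have nYe: "nY = np / nh" by (simp add: nY_def Y_def hns_mult hns_inverse np_def nh_def real_sqrt_mult real_sqrt_inverse divide_inverse)
    have nYp: "nY > 0" using pos nYe by simp
    have hqs: "hns (HH c a) = nq^2" using hq by (simp add: nq_def)
    have hYs: "hns Y = nY^2" by (simp add: nY_def hns_nonneg)
    have nTe: "norm T = nh * np * nq" using nT by (simp add: nh_def np_def nq_def)
    have sqh: "hns (HH a b) = nh^2" using hh by (simp add: nh_def)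
    define K where "K = norm T / \<bar>ReT\<bar>"
    have ReT_le: "\<bar>ReT\<bar> \<le> norm T"
    proof -
      have "ReT^2 \<le> hns (Qv T)" using h1_sq_le[of "Qv T"] by (simp add: ReT_def)
      then have "sqrt (ReT^2) \<le> sqrt (hns (Qv T))" by (rule real_sqrt_le_mono)
      then show ?thesis by (simp add: norm_quat)
    qed
    have K1: "K \<ge> 1" unfolding K_def by (subst pos_le_divide_eq) (use ReT_le Rneg in auto)
    have Ke: "K = 2 * nq * nY / (- nsq w)"
      using Rneg pos by (simp add: K_def sig nTe nYe sqh field_simps power2_eq_square)
    define rho0 where "rho0 = 1/2 + nq * nY / (- nsq w)"
    have rho0K: "rho0 = (1 + K) / 2" using N by (simp add: rho0_def Ke field_simps)
    have rho01: "rho0 \<ge> 1" using rho0K K1 by simp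
    define rho where "rho r = (hns (HH c a) - r * nsq w + r^2 * hns Y) / (- 2 * r * nsq w)" for r
    have rho_ge: "rho r \<ge> rho0" if "r > 0" for r
      using rho_bound[OF N that, of nq nY] by (simp add: rho_def rho0_def hqs hYs)
    have Nc: "nsq (Pj a b c) < 0" using N by (simp add: w_def)
    have lower: "2 * arcosh (sqrt rho0) \<le> hdist (qline w) g" if gg: "g \<in> geod x1 x2" for g
    proof -
      obtain r where r: "r > 0" "hdist (qline w) g = 2 * arcosh (sqrt (rho r))"
        using geod_ge[OF a(1,2) b(1,2) h a(3) b(3) Nc gg]
        by (auto simp: w_def rho_def Y_def)
      then show ?thesis using arcosh_sqrt_mono[OF rho01 rho_ge[OF r(1)]] by simp
    qed
    obtain g0 where g0: "g0 \<in> geod x1 x2" "hdist (qline w) g0 = 2 * arcosh (sqrt (rho (nq / nY)))"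
      using geod_witness[OF a(1,2) b(1,2) h a(3) b(3) Nc, of "nq / nY"] pos nYp
      by (auto simp: w_def rho_def Y_def)
    have "rho (nq / nY) = rho0"
      using rho_witness[OF N pos(3) nYp] by (simp add: rho_def rho0_def hqs hYs)
    then have g0': "hdist (qline w) g0 = 2 * arcosh (sqrt rho0)" using g0 by simp
    have dist: "hdist_set (qline w) (geod x1 x2) = 2 * arcosh (sqrt rho0)"
      unfolding hdist_set_def
    proof (rule cInf_eq_minimum)
      show "2 * arcosh (sqrt rho0) \<in> hdist (qline w) ` geod x1 x2"
        using g0(1) g0' by (metis image_eqI)
      fix x assume "x \<in> hdist (qline w) ` geod x1 x2"
      then show "2 * arcosh (sqrt rho0) \<le> x" using lower by blast
    qed
    have sh: "sinh (hdist_set (qline w) (geod x1 x2)) = sqrt (K^2 - 1)"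
      using sinh_final[OF K1] by (simp add: dist rho0K)
    define X where "X = \<bar>ReT\<bar> / norm T"
    have nTpos: "norm T > 0" using nTe pos by simp
    have X1: "0 < X" unfolding X_def using Rneg nTpos by (intro divide_pos_pos) auto
    have X2: "X \<le> 1" unfolding X_def by (subst pos_divide_le_eq[OF nTpos]) (use ReT_le in simp)
    note X = X1 X2
    have qcX: "qcartan x1 x2 x3 = arccos X" using qc by (simp add: X_def ReT_def)
    have XK: "1 / X = K" by (simp add: X_def K_def)
    have tn: "tan (qcartan x1 x2 x3) = sqrt (K^2 - 1)" using tan_final(1)[OF X] qcX XK by simp
    have lt: "qcartan x1 x2 x3 < pi / 2" using tan_final(2)[OF X] qcX by simp
    have K2: "0 \<le> sqrt (K^2 - 1)" using one_le_power[OF K1, of 2] by simp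
    show ?thesis using Peq notbd lt tn sh K2 by (simp add: Let_def)
  qed
qed


end
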